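(* Let $2\le n\le+\infty$ and let $\{a_i\}_{i=1}^n$ be a non-increasing $n$-tuple of positive numbers with $\sum_{i=1}^n a_i\le1$ and $\sum_{i=1}^n\eta(a_i)<+\infty$. Let $I_n=\mathbb{N}\cap[1,n]$, $d_k=\sum_{i=k+1}^n a_i$, $s_k=\sum_{i=k+1}^n\eta(a_i)$ for $k\in\{0\}\cup I_{n-1}$, $b_k=s_{k-1}+d_{k-1}\ln a_k$ for $k\in I_n$ (so $b_n=0$ if $n<\infty$). Define $z_0(0)=n$ and, for $b>0$, $$z_0(b)=\sum_{k=1}^{n-1}\mathbf{1}_{B'_k}(b)\left(k+d_ke^{\frac{s_k-b}{d_k}}\right),\quad B'_1=[b_2,+\infty),\ B'_k=[b_{k+1},b_k)\ (k\in I_{n-1}\setminus\{1\}).$$ For $b>0$ let $\bar{x}^b=\{x^b_i\}_{i=1}^n$ be the unique minimizer of $\sum_{i=1}^n e^{-bx_i}$ over the set of nondecreasing $n$-tuples $\{x_i\}$ of reals with $x_1=0$ and $\sum_{i=1}^n a_ix_i=1$ (so that $z_0(b)$ is the minimum value). Let $\theta>0$, $f(b)=\theta b+\ln z_0(b)$, and $$m=1\ \text{if}\ \theta<1/d_0,\qquad m=\max\{k\in I_{n-1}:\ d_k+ka_k\ge1/\theta\}\ \text{if}\ \theta\ge1/d_0.$$ (i) If $n<+\infty$: $f$ is positive, convex and continuously differentiable on $[0,+\infty)$; $f(0)=\ln n$, $f'(0^+)=\theta-\frac{1}{a_nn}$ and $\lim_{b\to+\infty}f(b)=+\infty$; and $\inf_{b\in[0,+\infty)}f(b)=f(b_*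 )$, where $b_*$ is the unique point of $[0,+\infty)$ at which the infimum is attained, given by: in case $A$ ($a_nn\ge1/\theta$), $b_*=0$ and $f(b_* )=\ln n$; in case $B$ ($a_nn<1/\theta$), $b_*=s_m+d_m\ln\frac{1-\theta d_m}{\theta m}$ and $f(b_* )=b_*\theta+\ln\frac{m}{1-d_m\theta}$. In case $A$, $\lim_{b\to0^+}x^b_i=0$ for $1\le i\le\tilde m$ and $\lim_{b\to0^+}x^b_i=\frac{1}{a_n(n-\tilde m)}$ for $\tilde m<i\le n$, where $\tilde m=n-\max\{k\in\mathbb{N}\cap[1,n-1]:a_{n-k+1}=a_n\}$. In case $B$, $x^{b_*}_i=0$ for $1\le i\le m$ and $x^{b_*}_i=\frac{1}{b_*}\ln\frac{1-\theta d_m}{a_i\theta m}$ for $m<i\le n$. (ii) If $n=+\infty$: $f$ is positive, convex and continuously differentiable on $(0,+\infty)$; $\lim_{b\to0^+}f(b)=+\infty$, $\lim_{b\to0^+}f'(b)=-\infty$, $\lim_{b\to+\infty}f(b)=+\infty$; $\inf_{b\in(0,+\infty)}f(b)=f(b_* )$ with $b_*=s_m+d_m\ln\frac{1-\theta d_m}{\theta m}$ the unique point of $[0,+\infty)$ where the infimum is attained (with $f(0)=+\infty$), and $$f(b_* )=\theta s_m+\eta(1-\theta d_m)+(1-\theta d_m)\ln m+d_m\eta(\theta).$$ Moreover $x^{b_*}_i=0$ for $1\le i\le m$, $x^{b_*}_i=\frac{1}{b_*}\ln\frac{1-\theta d_m}{a_i\theta m}$ for $i>m$, and $$\sum_{i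=1}^{+\infty}x^{b_*}_ie^{-b_*x^{b_*}_i}=\theta\sum_{i=1}^{+\infty}e^{-b_*x^{b_*}_i}.$$
   Context: $\eta(x)=-x\ln x$ for $x>0$, $\eta(0)=0$. An $n$-tuple with $n=+\infty$ means a sequence. $\mathbf{1}_B$ is the indicator function of $B$; $f'(0^+)$ is the right derivative at $0$. *)

theory Defs
  imports "HOL-Analysis.Analysis" "HOL-Library.Extended_Nat"
begin

definition eta :: "real \<Rightarrow> real" where
  "eta x = (if x > 0 then - x * ln x else 0)"

definition Idx :: "enat \<Rightarrow> nat set" where
  "Idx n = {i. 1 \<le> i \<and> enat i \<le> n}"

definition dd :: "enat \<Rightarrow> (nat \<Rightarrow> real) \<Rightarrow> nat \<Rightarrow> real" where
  "dd n a k = infsum a {i \<in> Idx n. k < i}"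

definition ss :: "enat \<Rightarrow> (nat \<Rightarrow> real) \<Rightarrow> nat \<Rightarrow> real" where
  "ss n a k = infsum (\<lambda>i. eta (a i)) {i \<in> Idx n. k < i}"

definition bb :: "enat \<Rightarrow> (nat \<Rightarrow> real) \<Rightarrow> nat \<Rightarrow> real" where
  "bb n a k = ss n a (k - 1) + dd n a (k - 1) * ln (a k)"

definition Bp :: "enat \<Rightarrow> (nat \<Rightarrow> real) \<Rightarrow> nat \<Rightarrow> real set" where
  "Bp n a k = (if k = 1 then {bb n a 2..} else {bb n a (k + 1)..<bb n a k})"

text \<open>z_0; z_0(0) = n (only meaningful for finite n).\<close>
definition z0 :: "enat \<Rightarrow> (nat \<Rightarrow> real) \<Rightarrow> real \<Rightarrow> real" where
  "z0 n a b = (if b = 0 then real (the_enat n)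
     else infsum (\<lambda>k. indicator (Bp n a k) b *
                       (real k + dd n a k * exp ((ss n a k - b) / dd n a k)))
                 {k. 1 \<le> k \<and> enat (k + 1) \<le> n})"

definition feasible :: "enat \<Rightarrow> (nat \<Rightarrow> real) \<Rightarrow> (nat \<Rightarrow> real) \<Rightarrow> bool" where
  "feasible n a x \<longleftrightarrow>
     (\<forall>i. i \<notin> Idx n \<longrightarrow> x i = 0) \<and>
     (\<forall>i\<in>Idx n. \<forall>j\<in>Idx n. i \<le> j \<longrightarrow> x i \<le> x j) \<and>
     x 1 = 0 \<and>
     (\<lambda>i. a i * x i) summable_on Idx n \<and> infsum (\<lambda>i. a i * x i) (Idx n) = 1"

text \<open>x minimizes sum e^{-b x_i} over feasible tuples (a non-summable sum is +infinity).\<close>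
definition is_minimizer :: "enat \<Rightarrow> (nat \<Rightarrow> real) \<Rightarrow> real \<Rightarrow> (nat \<Rightarrow> real) \<Rightarrow> bool" where
  "is_minimizer n a b x \<longleftrightarrow>
     feasible n a x \<and> (\<lambda>i. exp (- b * x i)) summable_on Idx n \<and>
     (\<forall>y. feasible n a y \<and> (\<lambda>i. exp (- b * y i)) summable_on Idx n \<longrightarrow>
          infsum (\<lambda>i. exp (- b * x i)) (Idx n) \<le> infsum (\<lambda>i. exp (- b * y i)) (Idx n))"

definition xb :: "enat \<Rightarrow> (nat \<Rightarrow> real) \<Rightarrow> real \<Rightarrow> nat \<Rightarrow> real" where
  "xb n a b = (THE x. is_minimizer n a b x)"

definition ff :: "enat \<Rightarrow> (nat \<Rightarrow> real) \<Rightarrow> real \<Rightarrow> real \<Rightarrow> real" where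
  "ff n a \<theta> b = \<theta> * b + ln (z0 n a b)"

definition mm :: "enat \<Rightarrow> (nat \<Rightarrow> real) \<Rightarrow> real \<Rightarrow> nat" where
  "mm n a \<theta> = (if \<theta> < 1 / dd n a 0 then 1
     else Max {k. 1 \<le> k \<and> enat (k + 1) \<le> n \<and> dd n a k + real k * a k \<ge> 1 / \<theta>})"

end

theory Submission
  imports Defs
begin

lemma infsum_diff_real:
  fixes f g :: "'a \<Rightarrow> real"
  assumes "f summable_on A" "g summable_on A"
  shows "infsum (\<lambda>x. f x - g x) A = infsum f A - infsum g A"
proof -
  have "infsum (\<lambda>x. f x + (- g x)) A = infsum f A + infsum (\<lambda>x. - g x) A"
    using assms by (intro infsum_add) (auto simp: summable_on_uminus)
  then show ?thesis by (simp add: infsum_uminus)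
qed

lemma summable_on_diff_real:
  fixes f g :: "'a \<Rightarrow> real"
  assumes "f summable_on A" "g summable_on A"
  shows "(\<lambda>x. f x - g x) summable_on A"
proof -
  have "(\<lambda>x. f x + (- g x)) summable_on A"
    using assms by (intro summable_on_add) (auto simp: summable_on_uminus)
  then show ?thesis by simp
qed

lemma Idx_iff: "i \<in> Idx n \<longleftrightarrow> 1 \<le> i \<and> enat i \<le> n"
  by (simp add: Idx_def)

lemma K1_term:
  fixes p q :: real
  assumes p: "p > 0" and q: "q > 0"
  shows "0 \<le> min 1 q - min 1 p + p * (max 0 (- ln q) - max 0 (- ln p))"
proof (cases "p \<le> 1")
  case True
  note pl = True
  show ?thesis
  proof (cases "q \<le> 1")
    case True
    have "ln (q / p) \<le> q / p - 1" using p q by (intro ln_le_minus_one) auto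
    then have "p * ln (q / p) \<le> p * (q / p - 1)" using p by (intro mult_left_mono) auto
    then have "p * (ln q - ln p) \<le> q - p" using p q by (simp add: ln_div algebra_simps)
    moreover have "- ln q \<ge> 0" "- ln p \<ge> 0" using True pl p q by auto
    ultimately show ?thesis using True pl by (simp add: algebra_simps)
  next
    case False
    have "ln (1 / p) \<le> 1 / p - 1" using p by (intro ln_le_minus_one) auto
    then have "p * ln (1 / p) \<le> p * (1 / p - 1)" using p by (intro mult_left_mono) auto
    then have "- p * ln p \<le> 1 - p" using p by (simp add: ln_div algebra_simps)
    moreover have "- ln q \<le> 0" "- ln p \<ge> 0" using False pl p q by auto
    ultimately show ?thesis using False pl by (simp add: algebra_simps)
  qed
next
  case False
  note pg = False
  show ?thesis
  proof (cases "q \<le> 1")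
    case True
    have "ln q \<le> q - 1" using q by (intro ln_le_minus_one) auto
    then have "1 - q \<le> - ln q" by simp
    moreover have "0 \<le> 1 - q" using True by simp
    ultimately have "1 - q \<le> p * (- ln q)" using pg
      by (smt (verit, best) mult_le_cancel_right1 mult_minus_right)
    moreover have "- ln q \<ge> 0" "- ln p \<le> 0" using True pg p q by auto
    ultimately show ?thesis using True pg by (simp add: algebra_simps)
  next
    case False
    then show ?thesis using pg p q by simp
  qed
qed

lemma convex_D:
  fixes D :: "real set"
  assumes "{0<..} \<subseteq> D" "D \<subseteq> {0..}"
  shows "convex D" and "x \<in> D \<Longrightarrow> y \<in> D \<Longrightarrow> {x..y} \<subseteq> D"
proof -
  show "x \<in> D \<Longrightarrow> y \<in> D \<Longrightarrow> {x..y} \<subseteq> D"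
  proof
    fix z assume "x \<in> D" "y \<in> D" "z \<in> {x..y}"
    then show "z \<in> D" using assms by (cases "z = x") force+
  qed
  show "convex D"
  proof (rule convexI)
    fix x y and u v :: real assume xy: "x \<in> D" "y \<in> D" "0 \<le> u" "0 \<le> v" "u + v = 1"
    have "0 \<le> x" "0 \<le> y" using xy assms by auto
    then have nn: "0 \<le> u * x" "0 \<le> v * y" using xy by auto
    show "u *\<^sub>R x + v *\<^sub>R y \<in> D"
    proof (cases "0 < u * x + v * y")
      case True then show ?thesis using assms by auto
    next
      case False
      then have z: "u * x = 0" "v * y = 0" using nn by linarith+
      have "0 \<in> D"
      proof (cases "u = 0")
        case True
        then have "v = 1" using xy by simp
        then show ?thesis using z True xy by simp
      next
        case False
        then have "x = 0" using z by simp
        then show ?thesis using z xy by simp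
      qed
      moreover have "u *\<^sub>R x + v *\<^sub>R y = 0" using z by (metis add.right_neutral real_scaleR_def)
      ultimately show ?thesis by simp
    qed
  qed
qed

lemma MVT_D:
  fixes f f' :: "real \<Rightarrow> real"
  assumes D: "{0<..} \<subseteq> D" "D \<subseteq> {0..}" and c: "continuous_on D f"
    and dv: "\<And>x. 0 < x \<Longrightarrow> (f has_real_derivative f' x) (at x)"
    and xy: "x \<in> D" "y \<in> D" "x < y"
  shows "\<exists>z. x < z \<and> z < y \<and> f y - f x = (y - x) * f' z"
proof -
  have "continuous_on {x..y} f" using c convex_D(2)[OF D xy(1,2)] continuous_on_subset by blast
  moreover have "0 \<le> x" using xy D by auto
  moreover have "f differentiable (at z)" if "x < z" "z < y" for z
    using dv[of z] that \<open>0 \<le> x\<close> real_differentiable_def by auto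
  ultimately obtain l z where lz: "x < z" "z < y" "DERIV f z :> l" "f y - f x = (y - x) * l"
    using MVT[OF xy(3)] by blast
  then have "l = f' z" using dv[of z] \<open>0 \<le> x\<close> DERIV_unique by force
  then show ?thesis using lz by blast
qed

lemma convex_from_deriv:
  fixes f f' :: "real \<Rightarrow> real"
  assumes D: "{0<..} \<subseteq> D" "D \<subseteq> {0..}" and c: "continuous_on D f"
    and dv: "\<And>x. 0 < x \<Longrightarrow> (f has_real_derivative f' x) (at x)"
    and mono: "\<And>x y. 0 < x \<Longrightarrow> x \<le> y \<Longrightarrow> f' x \<le> f' y"
  shows "convex_on D f"
proof (rule convex_on_linorderI)
  show "convex D" by (rule convex_D(1)[OF D])
  fix t x y :: real
  assume t: "t > 0" "t < 1"
  assume xy: "x \<in> D" "y \<in> D" "x < y"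
  define z where "z = (1 - t) * x + t * y"
  from xy t have xz: "z > x" by (simp add: z_def algebra_simps)
  have "y - z = (1 - t) * (y - x)" by (simp add: z_def algebra_simps)
  also from xy t have "\<dots> > 0" by (intro mult_pos_pos) simp_all
  finally have yz: "z < y" by simp
  have zD: "z \<in> D" using convex_D(2)[OF D xy(1,2)] xz yz by auto
  obtain \<xi> where \<xi>: "\<xi> > x" "\<xi> < z" "f z - f x = (z - x) * f' \<xi>"
    using MVT_D[OF D c dv xy(1) zD xz] by blast
  obtain \<eta> where \<eta>: "\<eta> > z" "\<eta> < y" "f y - f z = (y - z) * f' \<eta>"
    using MVT_D[OF D c dv zD xy(2) yz] by blast
  have "0 \<le> x" using xy D by auto
  have "f' \<xi> \<le> f' \<eta>" using \<xi> \<eta> \<open>0 \<le> x\<close> by (intro mono) auto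
  then have "(f z - f x) / (z - x) \<le> (f y - f z) / (y - z)"
    using \<xi> \<eta> xz yz by simp
  then have "(f z - f x) * (y - z) \<le> (f y - f z) * (z - x)"
    using xz yz by (simp add: field_simps)
  also have "z - x = t * (y - x)" by (simp add: z_def algebra_simps)
  also have "y - z = (1 - t) * (y - x)" by (simp add: z_def algebra_simps)
  finally have "(f z - f x) * (1 - t) \<le> (f y - f z) * t"
    using xy by (simp add: mult.assoc[symmetric] mult_le_cancel_right)
  then show "f ((1 - t) *\<^sub>R x + t *\<^sub>R y) \<le> (1 - t) * f x + t * f y"
    by (simp add: z_def algebra_simps)
qed

lemma min_from_deriv:
  fixes f f' :: "real \<Rightarrow> real"
  assumes D: "{0<..} \<subseteq> D" "D \<subseteq> {0..}" and c: "continuous_on D f"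
    and dv: "\<And>x. 0 < x \<Longrightarrow> (f has_real_derivative f' x) (at x)"
    and bs: "bs \<in> D"
    and up: "\<And>x. 0 < x \<Longrightarrow> bs < x \<Longrightarrow> 0 < f' x"
    and dn: "\<And>x. 0 < x \<Longrightarrow> x < bs \<Longrightarrow> f' x < 0"
    and b: "b \<in> D" "b \<noteq> bs"
  shows "f bs < f b"
proof (cases "bs < b")
  case True
  obtain z where z: "bs < z" "z < b" "f b - f bs = (b - bs) * f' z"
    using MVT_D[OF D c dv bs b(1) True] by blast
  have "0 \<le> bs" using bs D by auto
  then have "0 < f' z" using z up by auto
  then have "0 < (b - bs) * f' z" using True by simp
  then show ?thesis using z by simp
next
  case False
  then have lt: "b < bs" using b by simp
  obtain z where z: "b < z" "z < bs" "f bs - f b = (bs - b) * f' z"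
    using MVT_D[OF D c dv b(1) bs lt] by blast
  have "0 \<le> b" using b D by auto
  then have "f' z < 0" using z dn by auto
  then have "(bs - b) * f' z < 0" using lt by (simp add: mult_pos_neg)
  then show ?thesis using z by simp
qed

lemma exp_eq_one_plus: "exp t = 1 + t \<Longrightarrow> t = (0::real)"
proof (rule ccontr)
  assume e: "exp t = 1 + t" and t: "t \<noteq> 0"
  show False
  proof (cases "1 + t / 2 < 0")
    case True
    then have "1 + t < 0" by simp
    then show False using e exp_gt_zero[of t] by simp
  next
    case False
    have "1 + t / 2 \<le> exp (t / 2)" by (rule exp_ge_add_one_self)
    then have "(1 + t / 2)^2 \<le> (exp (t / 2))^2" using False by (intro power_mono) auto
    also have "(exp (t / 2))^2 = exp t" by (simp add: power2_eq_square exp_add[symmetric])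
    finally have "1 + t + t^2 / 4 \<le> exp t" by (simp add: power2_eq_square field_simps)
    moreover have "0 < t^2" using t by simp
    ultimately show False using e by simp
  qed
qed

lemma tangent1:
  fixes p u :: real assumes p: "0 < p"
  shows "0 \<le> exp (- u) - p + p * (u + ln p)"
    and "exp (- u) - p + p * (u + ln p) = 0 \<Longrightarrow> u = - ln p"
proof -
  have e: "exp (- u) = p * exp (- ln p - u)" using p by (simp add: exp_diff exp_minus field_simps)
  have ge: "1 + (- ln p - u) \<le> exp (- ln p - u)" by (rule exp_ge_add_one_self)
  then have "p * (1 + (- ln p - u)) \<le> p * exp (- ln p - u)" using p by simp
  then show "0 \<le> exp (- u) - p + p * (u + ln p)" using e by (simp add: algebra_simps)
  assume z: "exp (- u) - p + p * (u + ln p) = 0"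
  then have "p * exp (- ln p - u) = p * (1 + (- ln p - u))" using e by (simp add: algebra_simps)
  then have "exp (- ln p - u) = 1 + (- ln p - u)" using p by simp
  then have "- ln p - u = 0" by (rule exp_eq_one_plus)
  then show "u = - ln p" by simp
qed

lemma tangent2:
  fixes c u :: real assumes u: "0 \<le> u" and c: "1 \<le> c"
  shows "0 \<le> exp (- u) - 1 + c * u"
    and "exp (- u) - 1 + c * u = 0 \<Longrightarrow> u = 0"
proof -
  have ge: "1 + (- u) \<le> exp (- u)" by (rule exp_ge_add_one_self)
  have cu: "u \<le> c * u" using u c by (simp add: mult_right_mono[of 1 c u, simplified])
  show "0 \<le> exp (- u) - 1 + c * u" using ge cu u by linarith
  assume "exp (- u) - 1 + c * u = 0"
  then have "exp (- u) = 1 + (- u)" using ge cu by linarith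
  then have "- u = 0" by (rule exp_eq_one_plus)
  then show "u = 0" by simp
qed

lemma tail0:
  fixes f :: "nat \<Rightarrow> real"
  assumes sf: "f summable_on A" and nn: "\<And>i. i \<in> A \<Longrightarrow> 0 \<le> f i"
  shows "(\<lambda>k. infsum f {i\<in>A. k < i}) \<longlonglongrightarrow> 0"
proof (rule LIMSEQ_I)
  fix r :: real assume r: "0 < r"
  obtain F where F: "finite F" "F \<subseteq> A" "dist (sum f F) (infsum f A) \<le> r / 2"
    using infsum_finite_approximation[OF sf, of "r / 2"] r by auto
  define K where "K = Max (insert 0 F)"
  have FK: "i \<le> K" if "i \<in> F" for i using F that by (auto simp: K_def)
  show "\<exists>no. \<forall>k\<ge>no. norm (infsum f {i\<in>A. k < i} - 0) < r"
  proof (intro exI allI impI)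
    fix k assume k: "K \<le> k"
    have s1: "f summable_on {i\<in>A. i \<le> k}" "f summable_on {i\<in>A. k < i}"
      using sf by (auto intro: summable_on_subset_banach)
    have "infsum f A = infsum f ({i\<in>A. i \<le> k} \<union> {i\<in>A. k < i})"
      by (rule arg_cong[where f = "infsum f"]) auto
    also have "\<dots> = infsum f {i\<in>A. i \<le> k} + infsum f {i\<in>A. k < i}"
      using s1 by (intro infsum_Un_disjoint) auto
    finally have split: "infsum f A = infsum f {i\<in>A. i \<le> k} + infsum f {i\<in>A. k < i}" .
    have Fs: "F \<subseteq> {i\<in>A. i \<le> k}" using F(2) FK k le_trans by blast
    have "sum f F \<le> infsum f {i\<in>A. i \<le> k}"
      using F(1) Fs nn s1 by (intro finite_sum_le_infsum) auto
    moreover have "0 \<le> infsum f {i\<in>A. k < i}" using nn by (intro infsum_nonneg) auto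
    ultimately show "norm (infsum f {i\<in>A. k < i} - 0) < r"
      using split F(3) r by (auto simp: dist_real_def)
  qed
qed

lemma alg_fval:
  fixes F X \<theta> s d q lm lq lt :: real
  assumes h1: "F = X * \<theta> + lm - lq" and h2: "X = s + d * (lq - lt - lm)" and h3: "\<theta> * d = 1 - q"
  shows "F = \<theta> * s + (- q * lq) + q * lm + d * (- \<theta> * lt)"
proof -
  have "F = \<theta> * s + (\<theta> * d) * lq - d * \<theta> * lt - (\<theta> * d) * lm + lm - lq"
    using h1 h2 by (simp add: algebra_simps)
  also have "\<dots> = \<theta> * s + (1 - q) * lq - d * \<theta> * lt - (1 - q) * lm + lm - lq"
    by (simp only: h3)
  finally show ?thesis by (simp add: algebra_simps)
qed

locale L =
  fixes n :: enat and a :: "nat \<Rightarrow> real"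
  assumes n2: "2 \<le> n"
    and apos: "\<forall>i\<in>Idx n. 0 < a i"
    and amono: "\<forall>i\<in>Idx n. \<forall>j\<in>Idx n. i \<le> j \<longrightarrow> a j \<le> a i"
    and asum: "a summable_on Idx n" and asum1: "infsum a (Idx n) \<le> 1"
    and eta_sum: "(\<lambda>i. eta (a i)) summable_on Idx n"
begin

abbreviation "I \<equiv> Idx n"
definition "J = {i \<in> I. 2 \<le> i}"
definition "T k = {i \<in> I. k < i}"
abbreviation "d \<equiv> dd n a"
abbreviation "s \<equiv> ss n a"
definition "g k = d k + real k * a k"

definition beta :: "real \<Rightarrow> real" where
  "beta E = infsum (\<lambda>i. a i * max 0 (- ln (E * a i))) J"
definition Zf :: "real \<Rightarrow> real" where
  "Zf E = 1 + infsum (\<lambda>i. min 1 (E * a i)) J"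
definition Phi :: "real \<Rightarrow> real" where
  "Phi E = 1 / E + infsum (\<lambda>i. min (1 / E) (a i)) J"

lemma I_down: "i \<in> I \<Longrightarrow> 1 \<le> j \<Longrightarrow> j \<le> i \<Longrightarrow> j \<in> I"
proof -
  assume "i \<in> I" "1 \<le> j" "j \<le> i"
  then have "enat j \<le> enat i" "enat i \<le> n" by (auto simp: Idx_iff)
  then have "enat j \<le> n" by (rule order_trans)
  then show ?thesis using \<open>1 \<le> j\<close> by (simp add: Idx_iff)
qed

lemma two_I: "2 \<in> I"
  using n2 by (simp add: Idx_iff numeral_eq_enat)

lemma one_I: "1 \<in> I" and two_J: "2 \<in> J"
  using I_down[OF two_I, of 1] two_I by (auto simp: J_def)

lemma J_sub: "J \<subseteq> I" and T_sub: "T k \<subseteq> I"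
  by (auto simp: J_def T_def)

lemma d_def': "d k = infsum a (T k)" and s_def': "s k = infsum (\<lambda>i. eta (a i)) (T k)"
  by (simp_all add: dd_def ss_def T_def)

lemma sa: "A \<subseteq> I \<Longrightarrow> a summable_on A"
  using asum summable_on_subset_banach by blast

lemma se: "A \<subseteq> I \<Longrightarrow> (\<lambda>i. eta (a i)) summable_on A"
  using eta_sum summable_on_subset_banach by blast

lemma a_le1: "i \<in> I \<Longrightarrow> a i \<le> 1"
proof -
  assume i: "i \<in> I"
  have "sum a {i} \<le> infsum a I"
    using i apos by (intro finite_sum_le_infsum asum) auto
  then show ?thesis using asum1 by simp
qed

lemma eta_a: "i \<in> I \<Longrightarrow> eta (a i) = - a i * ln (a i)"
  using apos by (simp add: eta_def)

lemma eta_a_nonneg: "i \<in> I \<Longrightarrow> 0 \<le> eta (a i)"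
proof -
  assume i: "i \<in> I"
  have "ln (a i) \<le> 0" using a_le1[OF i] apos i by simp
  moreover have "0 \<le> a i" using apos i by (simp add: less_imp_le)
  ultimately have "a i * ln (a i) \<le> 0" by (metis mult_nonneg_nonpos)
  then show ?thesis using eta_a[OF i] by simp
qed

lemma d_nonneg: "0 \<le> d k"
  unfolding d_def' using apos T_sub by (intro infsum_nonneg) (auto simp: less_imp_le subset_iff)

lemma s_nonneg: "0 \<le> s k"
  unfolding s_def' using eta_a_nonneg T_sub by (intro infsum_nonneg) auto

lemma T_insert: "Suc k \<in> I \<Longrightarrow> T k = insert (Suc k) (T (Suc k))"
  by (auto simp: T_def)

lemma d_step: "Suc k \<in> I \<Longrightarrow> d k = a (Suc k) + d (Suc k)"
  unfolding d_def' by (subst T_insert, assumption, rule infsum_insert) (auto intro: sa T_sub simp: T_def)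

lemma s_step: "Suc k \<in> I \<Longrightarrow> s k = eta (a (Suc k)) + s (Suc k)"
  unfolding s_def' by (subst T_insert, assumption, rule infsum_insert) (auto intro: se T_sub simp: T_def)

lemma d_pos: "Suc k \<in> I \<Longrightarrow> 0 < d k"
  using d_step[of k] d_nonneg[of "Suc k"] apos by fastforce

lemma beta_summ:
  assumes "E > 0" "A \<subseteq> I"
  shows "(\<lambda>i. a i * max 0 (- ln (E * a i))) summable_on A"
proof (rule summable_on_comparison_test)
  show "(\<lambda>i. \<bar>ln E\<bar> * a i + eta (a i)) summable_on A"
    using assms by (intro summable_on_add summable_on_cmult_right sa se) auto
  fix i assume i: "i \<in> A"
  then have iI: "i \<in> I" using assms by auto
  have ai: "0 < a i" using apos iI by auto
  have "- ln (E * a i) = - ln E - ln (a i)" using ai assms by (simp add: ln_mult)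
  moreover have "ln (a i) \<le> 0" using a_le1[OF iI] ai by simp
  ultimately have "max 0 (- ln (E * a i)) \<le> \<bar>ln E\<bar> - ln (a i)" by auto
  then have "a i * max 0 (- ln (E * a i)) \<le> a i * (\<bar>ln E\<bar> - ln (a i))"
    using ai by (intro mult_left_mono) auto
  then show "a i * max 0 (- ln (E * a i)) \<le> \<bar>ln E\<bar> * a i + eta (a i)"
    using eta_a[OF iI] by (simp add: algebra_simps)
  show "0 \<le> a i * max 0 (- ln (E * a i))" using ai by simp
qed

lemma Zf_summ:
  assumes "E > 0" "A \<subseteq> I"
  shows "(\<lambda>i. min 1 (E * a i)) summable_on A"
proof (rule summable_on_comparison_test)
  show "(\<lambda>i. E * a i) summable_on A"
    using assms by (intro summable_on_cmult_right sa) auto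
  fix i assume i: "i \<in> A"
  then have ai: "0 < a i" using apos assms by auto
  show "min 1 (E * a i) \<le> E * a i" by simp
  show "0 \<le> min 1 (E * a i)" using ai assms by simp
qed

lemma Phi_summ:
  assumes "E > 0" "A \<subseteq> I"
  shows "(\<lambda>i. min (1 / E) (a i)) summable_on A"
proof (rule summable_on_comparison_test)
  show "a summable_on A"
    using assms by (intro sa) auto
  fix i assume i: "i \<in> A"
  then have ai: "0 < a i" using apos assms by auto
  show "min (1 / E) (a i) \<le> a i" by simp
  show "0 \<le> min (1 / E) (a i)" using ai assms by simp
qed

lemma J_split:
  assumes "1 \<le> k" "k \<in> I"
  shows "J = {2..k} \<union> T k" "{2..k} \<inter> T k = {}" "{2..k} \<subseteq> I"
  using assms I_down[OF assms(2)] by (auto simp: J_def T_def)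

lemma split_beta:
  assumes k: "1 \<le> k" "k \<in> I" and E: "E > 0"
    and lo: "\<forall>i\<in>I. 2 \<le> i \<and> i \<le> k \<longrightarrow> 1 \<le> E * a i"
    and hi: "\<forall>i\<in>I. k < i \<longrightarrow> E * a i \<le> 1"
  shows "beta E = s k - d k * ln E"
proof -
  let ?t = "\<lambda>i. a i * max 0 (- ln (E * a i))"
  have "beta E = infsum ?t {2..k} + infsum ?t (T k)"
    unfolding beta_def using J_split[OF k] E T_sub
    by (simp only:) (intro infsum_Un_disjoint beta_summ, auto)
  moreover have "infsum ?t {2..k} = 0"
  proof (rule infsum_0)
    fix i assume "i \<in> {2..k}"
    then have "i \<in> I" "2 \<le> i" "i \<le> k" using J_split(3)[OF k] by auto
    then have "1 \<le> E * a i" using lo by auto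
    then show "?t i = 0" by simp
  qed
  moreover have "infsum ?t (T k) = infsum (\<lambda>i. eta (a i) - ln E * a i) (T k)"
  proof (rule infsum_cong)
    fix i assume i: "i \<in> T k"
    then have iI: "i \<in> I" and "k < i" by (auto simp: T_def)
    then have "E * a i \<le> 1" using hi by auto
    moreover have ai: "0 < a i" using apos iI by auto
    ultimately have "ln (E * a i) \<le> 0" using E by simp
    then have "max 0 (- ln (E * a i)) = - ln E - ln (a i)"
      using E ai by (simp add: ln_mult)
    then have "?t i = a i * (- ln E - ln (a i))" by simp
    then show "?t i = eta (a i) - ln E * a i" using eta_a[OF iI] by (simp add: algebra_simps)
  qed
  moreover have "infsum (\<lambda>i. eta (a i) - ln E * a i) (T k) = s k - ln E * d k"
    unfolding s_def' d_def' using T_sub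
    by (subst infsum_diff_real) (auto intro!: se summable_on_cmult_right sa infsum_cmult_right)
  ultimately show ?thesis by simp
qed

lemma split_Zf:
  assumes k: "1 \<le> k" "k \<in> I" and E: "E > 0"
    and lo: "\<forall>i\<in>I. 2 \<le> i \<and> i \<le> k \<longrightarrow> 1 \<le> E * a i"
    and hi: "\<forall>i\<in>I. k < i \<longrightarrow> E * a i \<le> 1"
  shows "Zf E = k + E * d k"
proof -
  let ?t = "\<lambda>i. min 1 (E * a i)"
  have "Zf E = 1 + (infsum ?t {2..k} + infsum ?t (T k))"
    unfolding Zf_def using J_split[OF k] E T_sub
    by (simp only:) (subst infsum_Un_disjoint, auto intro!: Zf_summ simp: T_def)
  moreover have "infsum ?t {2..k} = infsum (\<lambda>_. 1) {2..k}"
  proof (rule infsum_cong)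
    fix i assume "i \<in> {2..k}"
    then have "i \<in> I" "2 \<le> i" "i \<le> k" using J_split(3)[OF k] by auto
    then have "1 \<le> E * a i" using lo by auto
    then show "?t i = 1" by simp
  qed
  moreover have "infsum ?t (T k) = infsum (\<lambda>i. E * a i) (T k)"
  proof (rule infsum_cong)
    fix i assume i: "i \<in> T k"
    then have iI: "i \<in> I" and "k < i" by (auto simp: T_def)
    then have "E * a i \<le> 1" using hi by auto
    then show "?t i = E * a i" by simp
  qed
  moreover have "infsum (\<lambda>i. E * a i) (T k) = E * d k"
    unfolding d_def' by (rule infsum_cmult_right) (rule sa[OF T_sub])
  moreover have "infsum (\<lambda>_. 1::real) {2..k} = real k - 1"
    using k by simp
  ultimately show ?thesis by simp
qed


lemma beta_nonneg: "0 \<le> beta E"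
  unfolding beta_def
proof (rule infsum_nonneg)
  fix i assume "i \<in> J"
  then have "0 < a i" using apos J_sub by auto
  then show "0 \<le> a i * max 0 (- ln (E * a i))" by simp
qed

lemma beta_anti:
  assumes E: "0 < E" "E \<le> E'"
  shows "beta E' \<le> beta E"
  unfolding beta_def
proof (rule infsum_mono)
  show "(\<lambda>i. a i * max 0 (- ln (E' * a i))) summable_on J"
    "(\<lambda>i. a i * max 0 (- ln (E * a i))) summable_on J"
    using E J_sub by (auto intro!: beta_summ)
  fix i assume "i \<in> J"
  then have ai: "0 < a i" using apos J_sub by auto
  then have "ln (E * a i) \<le> ln (E' * a i)" using E by (auto intro!: mult_right_mono)
  then show "a i * max 0 (- ln (E' * a i)) \<le> a i * max 0 (- ln (E * a i))"
    using ai by (intro mult_left_mono) auto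
qed

lemma beta_strict:
  assumes E: "0 < E" "E < E'" and j: "j \<in> J" "E * a j < 1"
  shows "beta E' < beta E"
proof -
  let ?t = "\<lambda>E i. a i * max 0 (- ln (E * a i))"
  have sm: "?t E summable_on J" "?t E' summable_on J"
    using E J_sub by (auto intro!: beta_summ)
  have nn: "0 \<le> ?t E i - ?t E' i" if "i \<in> J" for i
  proof -
    have ai: "0 < a i" using that apos J_sub by auto
    then have "ln (E * a i) \<le> ln (E' * a i)" using E by (auto intro!: mult_right_mono)
    then have "a i * max 0 (- ln (E' * a i)) \<le> a i * max 0 (- ln (E * a i))"
      using ai by (intro mult_left_mono) auto
    then show ?thesis by simp
  qed
  have aj: "0 < a j" using j apos J_sub by auto
  have "ln (E * a j) < ln (E' * a j)" using E aj by auto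
  moreover have "ln (E * a j) < 0" using j E aj by simp
  ultimately have "max 0 (- ln (E' * a j)) < - ln (E * a j)" by auto
  then have "a j * max 0 (- ln (E' * a j)) < a j * max 0 (- ln (E * a j))"
    using aj \<open>ln (E * a j) < 0\<close> by (intro mult_strict_left_mono) auto
  then have "0 < ?t E j - ?t E' j" by simp
  also have "\<dots> = sum (\<lambda>i. ?t E i - ?t E' i) {j}" by simp
  also have "\<dots> \<le> infsum (\<lambda>i. ?t E i - ?t E' i) J"
    using j nn sm by (intro finite_sum_le_infsum summable_on_diff_real) auto
  also have "\<dots> = beta E - beta E'"
    unfolding beta_def using sm by (rule infsum_diff_real)
  finally show ?thesis by simp
qed

lemma beta_wit:
  assumes "0 < beta E"
  shows "\<exists>j\<in>J. E * a j < 1"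
proof (rule ccontr)
  assume "\<not> ?thesis"
  then have "beta E = 0" unfolding beta_def
    by (intro infsum_0) (auto simp: not_less)
  then show False using assms by simp
qed

lemma beta_inj:
  assumes "0 < E1" "0 < E2" "beta E1 = beta E2" "0 < beta E1"
  shows "E1 = E2"
proof (rule ccontr)
  assume ne: "E1 \<noteq> E2"
  show False
  proof (cases "E1 < E2")
    case True
    obtain j where "j \<in> J" "E1 * a j < 1" using beta_wit assms by blast
    then have "beta E2 < beta E1" using beta_strict True assms by blast
    then show False using assms by simp
  next
    case False
    then have lt: "E2 < E1" using ne by simp
    obtain j where "j \<in> J" "E2 * a j < 1" using beta_wit assms by fastforce
    then have "beta E1 < beta E2" using beta_strict lt assms by blast
    then show False using assms by simp
  qed
qed

lemma Zf_mono:
  assumes E: "0 < E" "E \<le> E'"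
  shows "Zf E \<le> Zf E'"
  unfolding Zf_def
proof (simp, rule infsum_mono)
  show "(\<lambda>i. min 1 (E' * a i)) summable_on J" "(\<lambda>i. min 1 (E * a i)) summable_on J"
    using E J_sub by (auto intro!: Zf_summ)
  fix i assume "i \<in> J"
  then have ai: "0 < a i" using apos J_sub by auto
  then show "min 1 (E * a i) \<le> min 1 (E' * a i)" using E by (intro min.mono) (auto intro!: mult_right_mono)
qed

lemma Zf_gt1:
  assumes E: "0 < E"
  shows "1 < Zf E"
proof -
  have a2: "0 < a 2" using apos two_I by auto
  have "0 < min 1 (E * a 2)" using a2 E by simp
  also have "\<dots> = sum (\<lambda>i. min 1 (E * a i)) {2}" by simp
  also have "\<dots> \<le> infsum (\<lambda>i. min 1 (E * a i)) J"
    using two_J E J_sub apos by (intro finite_sum_le_infsum Zf_summ) (auto simp: less_imp_le subset_iff)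
  finally show ?thesis unfolding Zf_def by simp
qed

lemma Phi_eq:
  assumes E: "0 < E"
  shows "Phi E = Zf E / E"
proof -
  have "infsum (\<lambda>i. min (1 / E) (a i)) J = infsum (\<lambda>i. (1 / E) * min 1 (E * a i)) J"
  proof (rule infsum_cong)
    fix i
    show "min (1 / E) (a i) = 1 / E * min 1 (E * a i)"
      using E by (simp add: min_def field_simps)
  qed
  also have "\<dots> = (1 / E) * infsum (\<lambda>i. min 1 (E * a i)) J"
    using E J_sub by (intro infsum_cmult_right Zf_summ) auto
  finally show ?thesis unfolding Phi_def Zf_def using E by (simp add: field_simps)
qed

lemma Phi_pos: "0 < E \<Longrightarrow> 0 < Phi E"
  using Phi_eq[of E] Zf_gt1[of E] by (smt (verit) divide_pos_pos)

lemma Phi_strict: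
  assumes E: "0 < E" "E < E'"
  shows "Phi E' < Phi E"
proof -
  have "infsum (\<lambda>i. min (1 / E') (a i)) J \<le> infsum (\<lambda>i. min (1 / E) (a i)) J"
  proof (rule infsum_mono)
    show "(\<lambda>i. min (1 / E') (a i)) summable_on J" "(\<lambda>i. min (1 / E) (a i)) summable_on J"
      using E J_sub by (auto intro!: Phi_summ)
    fix i show "min (1 / E') (a i) \<le> min (1 / E) (a i)"
      using E by (intro min.mono) (auto simp: frac_le)
  qed
  moreover have "1 / E' < 1 / E" using E by (simp add: frac_less2)
  ultimately show ?thesis unfolding Phi_def by simp
qed

lemma K1:
  assumes E: "0 < E" "0 < E'"
  shows "Zf E - E * (beta E' - beta E) \<le> Zf E'"
proof -
  let ?u = "\<lambda>E i. min 1 (E * a i)" and ?v = "\<lambda>E i. a i * max 0 (- ln (E * a i))"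
  have su: "?u E summable_on J" "?u E' summable_on J" and sv: "?v E summable_on J" "?v E' summable_on J"
    using E J_sub by (auto intro!: Zf_summ beta_summ)
  have "0 \<le> infsum (\<lambda>i. (?u E' i - ?u E i) + E * (?v E' i - ?v E i)) J"
  proof (rule infsum_nonneg)
    fix i assume "i \<in> J"
    then have ai: "0 < a i" using apos J_sub by auto
    have "0 \<le> min 1 (E' * a i) - min 1 (E * a i)
            + (E * a i) * (max 0 (- ln (E' * a i)) - max 0 (- ln (E * a i)))"
      using ai E by (intro K1_term) auto
    then show "0 \<le> (?u E' i - ?u E i) + E * (?v E' i - ?v E i)" by (simp add: algebra_simps)
  qed
  also have "\<dots> = infsum (\<lambda>i. ?u E' i - ?u E i) J + infsum (\<lambda>i. E * (?v E' i - ?v E i)) J"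
    using su sv
    by (intro infsum_add summable_on_diff_real summable_on_cmult_right)
  also have "infsum (\<lambda>i. E * (?v E' i - ?v E i)) J = E * infsum (\<lambda>i. ?v E' i - ?v E i) J"
    using sv by (intro infsum_cmult_right summable_on_diff_real)
  also have "infsum (\<lambda>i. ?v E' i - ?v E i) J = infsum (?v E') J - infsum (?v E) J"
    using sv by (intro infsum_diff_real)
  also have "infsum (\<lambda>i. ?u E' i - ?u E i) J = infsum (?u E') J - infsum (?u E) J"
    using su by (intro infsum_diff_real)
  finally show ?thesis unfolding Zf_def beta_def by (simp add: algebra_simps)
qed

lemma I_mono: "i \<in> I \<Longrightarrow> j \<in> I \<Longrightarrow> i \<le> j \<Longrightarrow> a j \<le> a i"
  using amono by blast

lemma bb_beta:
  assumes k: "2 \<le> k" "k \<in> I"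
  shows "bb n a k = beta (1 / a k)"
proof -
  have ak: "0 < a k" using apos k by auto
  have k1: "1 \<le> k - 1" "k - 1 \<in> I" using k I_down[OF k(2)] by auto
  have "beta (1 / a k) = s (k - 1) - d (k - 1) * ln (1 / a k)"
  proof (rule split_beta[OF k1])
    show "0 < 1 / a k" using ak by simp
    show "\<forall>i\<in>I. 2 \<le> i \<and> i \<le> k - 1 \<longrightarrow> 1 \<le> 1 / a k * a i"
      using I_mono[OF _ k(2)] ak by (auto simp: field_simps)
    show "\<forall>i\<in>I. k - 1 < i \<longrightarrow> 1 / a k * a i \<le> 1"
      using I_mono[OF k(2)] ak by (auto simp: field_simps)
  qed
  then show ?thesis unfolding bb_def using ak by (simp add: ln_div)
qed

lemma bb_anti:
  assumes "2 \<le> i" "i \<le> j" "j \<in> I"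
  shows "bb n a j \<le> bb n a i"
proof -
  have iI: "i \<in> I" using assms I_down by auto
  have "0 < a j" "0 < a i" using apos iI assms by auto
  moreover have "a j \<le> a i" using I_mono iI assms by auto
  ultimately have "1 / a i \<le> 1 / a j" by (simp add: frac_le)
  then show ?thesis using assms iI bb_beta \<open>0 < a i\<close> by (simp add: beta_anti)
qed

definition "Kset = {k. 1 \<le> k \<and> enat (k + 1) \<le> n}"

lemma Kset_iff: "k \<in> Kset \<longleftrightarrow> 1 \<le> k \<and> Suc k \<in> I"
  by (auto simp: Kset_def Idx_iff)

lemma region:
  assumes b: "0 < b" and ex: "\<exists>j\<in>Kset. bb n a (j + 1) \<le> b"
  shows "\<exists>E>0. beta E = b \<and> z0 n a b = Zf E"
proof -
  define P where "P j \<longleftrightarrow> j \<in> Kset \<and> bb n a (j + 1) \<le> b" for j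
  define k where "k = (LEAST j. P j)"
  have Pk: "P k" unfolding k_def using ex P_def by (metis LeastI)
  have nP: "\<not> P j" if "j < k" for j unfolding k_def using that not_less_Least k_def by blast
  have k1: "1 \<le> k" and kI: "Suc k \<in> I" and bk1: "bb n a (k + 1) \<le> b"
    using Pk by (auto simp: P_def Kset_iff)
  have kI': "k \<in> I" using I_down[OF kI] k1 by auto
  have bk: "b < bb n a k" if "2 \<le> k"
  proof -
    have "k - 1 \<in> Kset" using that kI' by (auto simp: Kset_iff)
    then have "\<not> bb n a (k - 1 + 1) \<le> b" using nP[of "k - 1"] that by (auto simp: P_def)
    then show ?thesis using that by simp
  qed
  have inB: "b \<in> Bp n a k"
    using bk bk1 k1 by (cases "k = 1") (auto simp: Bp_def numeral_2_eq_2)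
  have notB: "b \<notin> Bp n a k'" if "k' \<in> Kset" "k' \<noteq> k" for k'
  proof (cases "k' < k")
    case True
    then have "\<not> bb n a (k' + 1) \<le> b" using nP that by (auto simp: P_def)
    then show ?thesis by (auto simp: Bp_def numeral_2_eq_2)
  next
    case False
    then have "k < k'" using that by simp
    then have "2 \<le> k'" using k1 by simp
    have "k' \<in> I" using that I_down by (auto simp: Kset_iff)
    then have "bb n a k' \<le> bb n a (k + 1)" using \<open>k < k'\<close> k1 by (intro bb_anti) auto
    then show ?thesis using \<open>2 \<le> k'\<close> bk1 by (auto simp: Bp_def)
  qed
  let ?h = "\<lambda>k. real k + d k * exp ((s k - b) / d k)"
  have z: "z0 n a b = ?h k"
  proof -
    have "z0 n a b = infsum (\<lambda>k. indicator (Bp n a k) b * ?h k) Kset"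
      using b by (simp add: z0_def Kset_def)
    also have "\<dots> = infsum (\<lambda>k. indicator (Bp n a k) b * ?h k) {k}"
      using notB Pk by (intro infsum_cong_neutral) (auto simp: P_def)
    also have "\<dots> = ?h k" using inB by simp
    finally show ?thesis .
  qed
  have dk: "0 < d k" using d_pos[OF kI] .
  define E where "E = exp ((s k - b) / d k)"
  have E0: "0 < E" by (simp add: E_def)
  have lnE: "ln E = (s k - b) / d k" by (simp add: E_def)
  have ak1: "0 < a (Suc k)" using apos kI by auto
  have "bb n a (k + 1) = s k + d k * ln (a (Suc k))" by (simp add: bb_def)
  then have "ln E + ln (a (Suc k)) \<le> 0" using bk1 dk unfolding lnE
    by (simp add: field_simps)
  then have "ln (E * a (Suc k)) \<le> 0" using E0 ak1 by (simp add: ln_mult)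
  then have Ek1: "E * a (Suc k) \<le> 1" using E0 ak1 by simp
  have hi: "\<forall>i\<in>I. k < i \<longrightarrow> E * a i \<le> 1"
  proof (intro ballI impI)
    fix i assume "i \<in> I" "k < i"
    then have "a i \<le> a (Suc k)" using I_mono[OF kI] by auto
    then show "E * a i \<le> 1" using Ek1 E0 by (smt (verit) mult_left_mono)
  qed
  have lo: "\<forall>i\<in>I. 2 \<le> i \<and> i \<le> k \<longrightarrow> 1 \<le> E * a i"
  proof (intro ballI impI)
    fix i assume i: "i \<in> I" "2 \<le> i \<and> i \<le> k"
    then have k2: "2 \<le> k" by simp
    have ak: "0 < a k" using apos kI' by auto
    have "bb n a k = s (k - 1) + d (k - 1) * ln (a k)" by (simp add: bb_def)
    also have "s (k - 1) = eta (a k) + s k" using s_step[of "k - 1"] kI' k1 by simp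
    also have "d (k - 1) = a k + d k" using d_step[of "k - 1"] kI' k1 by simp
    finally have "bb n a k = s k + d k * ln (a k)" using eta_a[OF kI'] by (simp add: algebra_simps)
    then have "0 < ln E + ln (a k)" using bk[OF k2] dk unfolding lnE by (simp add: field_simps)
    then have "0 < ln (E * a k)" using E0 ak by (simp add: ln_mult)
    then have "1 < E * a k" using E0 ak by (simp add: ln_gt_zero_iff)
    moreover have "a k \<le> a i" using I_mono[OF i(1) kI'] i by auto
    ultimately show "1 \<le> E * a i" using E0 by (smt (verit) mult_left_mono)
  qed
  have "beta E = s k - d k * ln E" by (rule split_beta[OF k1 kI' E0 lo hi])
  then have "beta E = b" using dk unfolding lnE by simp
  moreover have "Zf E = k + E * d k" by (rule split_Zf[OF k1 kI' E0 lo hi])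
  ultimately have "beta E = b \<and> z0 n a b = Zf E" using z by (simp add: E_def algebra_simps)
  then show ?thesis using E0 by blast
qed

definition Eb :: "real \<Rightarrow> real" where
  "Eb b = (if b \<le> 0 then 1 / a (the_enat n) else (THE E. 0 < E \<and> beta E = b))"

lemma Eb_region:
  assumes b: "0 < b" and ex: "\<exists>j\<in>Kset. bb n a (j + 1) \<le> b"
  shows "0 < Eb b \<and> beta (Eb b) = b \<and> z0 n a b = Zf (Eb b)"
proof -
  obtain E where E: "0 < E" "beta E = b" "z0 n a b = Zf E" using region[OF b ex] by blast
  have "Eb b = E" unfolding Eb_def using b E
    by (auto intro!: the_equality dest: beta_inj)
  then show ?thesis using E by simp
qed

definition "goodD D \<longleftrightarrow> {0<..} \<subseteq> D \<and> D \<subseteq> {0..} \<and>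
   (\<forall>b\<in>D. 0 < Eb b \<and> beta (Eb b) = b \<and> z0 n a b = Zf (Eb b)) \<and>
   (\<forall>b\<in>D. \<forall>E. 0 < E \<and> E < Eb b \<longrightarrow> (\<exists>j\<in>J. E * a j < 1))"

lemma wit_pos:
  assumes "0 < Eb b" "beta (Eb b) = b" "0 < b" "0 < E" "E < Eb b"
  shows "\<exists>j\<in>J. E * a j < 1"
proof -
  obtain j where j: "j \<in> J" "Eb b * a j < 1" using beta_wit[of "Eb b"] assms by auto
  have "0 < a j" using j apos J_sub by auto
  then have "E * a j < Eb b * a j" using assms by simp
  then have "E * a j < 1" using j by linarith
  then show ?thesis using j(1) by blast
qed

definition "fd \<theta> b = \<theta> - Eb b / z0 n a b"

context
  fixes D and \<theta> :: real assumes gD: "goodD D"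
begin

lemma gD_sub: "b \<in> D \<Longrightarrow> 0 \<le> b" and gD_pos: "0 < b \<Longrightarrow> b \<in> D"
  using gD by (auto simp: goodD_def)

lemma gD_E: "b \<in> D \<Longrightarrow> 0 < Eb b" "b \<in> D \<Longrightarrow> beta (Eb b) = b" "b \<in> D \<Longrightarrow> z0 n a b = Zf (Eb b)"
  using gD by (auto simp: goodD_def)

lemma gD_wit: "b \<in> D \<Longrightarrow> 0 < E \<Longrightarrow> E < Eb b \<Longrightarrow> \<exists>j\<in>J. E * a j < 1"
  using gD by (auto simp: goodD_def)

lemma Eb_anti:
  assumes "b \<in> D" "y \<in> D" "b \<le> y"
  shows "Eb y \<le> Eb b"
proof (rule ccontr)
  assume "\<not> ?thesis"
  then have "beta (Eb y) \<le> beta (Eb b)" using gD_E assms by (intro beta_anti) auto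
  then have "y \<le> b" using gD_E assms by simp
  then have "y = b" using assms by simp
  then show False using \<open>\<not> Eb y \<le> Eb b\<close> by simp
qed

lemma Eb_strict:
  assumes "b \<in> D" "y \<in> D" "b < y"
  shows "Eb y < Eb b"
proof -
  have "Eb y \<le> Eb b" using Eb_anti assms by simp
  moreover have "Eb y \<noteq> Eb b" using gD_E assms by (metis less_irrefl)
  ultimately show ?thesis by simp
qed

lemma Eb_cont:
  assumes b: "b \<in> D"
  shows "(Eb \<longlongrightarrow> Eb b) (at b within D)"
proof (unfold tendsto_iff, intro allI impI)
  fix \<epsilon> :: real assume \<epsilon>: "0 < \<epsilon>"
  define E0 where "E0 = Eb b"
  have E0: "0 < E0" "beta E0 = b" using gD_E b by (auto simp: E0_def)
  obtain \<delta>1 where \<delta>1: "0 < \<delta>1" "\<forall>y\<in>D. b < y \<and> y < b + \<delta>1 \<longrightarrow> E0 - \<epsilon> < Eb y"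
  proof (cases "E0 - \<epsilon> \<le> 0")
    case True
    then show ?thesis using that[of 1] gD_E by force
  next
    case False
    then obtain j where j: "j \<in> J" "(E0 - \<epsilon>) * a j < 1" using gD_wit[OF b, of "E0 - \<epsilon>"] \<epsilon>
      by (auto simp: E0_def)
    have lt: "b < beta (E0 - \<epsilon>)" using beta_strict[OF _ _ j] False \<epsilon> E0 by auto
    show ?thesis
    proof (rule that[of "beta (E0 - \<epsilon>) - b"])
      show "0 < beta (E0 - \<epsilon>) - b" using lt by simp
      show "\<forall>y\<in>D. b < y \<and> y < b + (beta (E0 - \<epsilon>) - b) \<longrightarrow> E0 - \<epsilon> < Eb y"
      proof (intro ballI impI)
        fix y assume y: "y \<in> D" "b < y \<and> y < b + (beta (E0 - \<epsilon>) - b)"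
        show "E0 - \<epsilon> < Eb y"
        proof (rule ccontr)
          assume "\<not> ?thesis"
          then have "beta (E0 - \<epsilon>) \<le> beta (Eb y)" using gD_E[OF y(1)] by (intro beta_anti) auto
          then show False using y gD_E[OF y(1)] by simp
        qed
      qed
    qed
  qed
  obtain \<delta>2 where \<delta>2: "0 < \<delta>2" "\<forall>y\<in>D. b - \<delta>2 < y \<and> y < b \<longrightarrow> Eb y < E0 + \<epsilon>"
  proof (cases "b \<le> 0")
    case True
    then show ?thesis using that[of 1] gD_sub by force
  next
    case False
    then obtain j where j: "j \<in> J" "E0 * a j < 1" using beta_wit[of E0] E0 by auto
    have lt: "beta (E0 + \<epsilon>) < b" using beta_strict[OF _ _ j] \<epsilon> E0 by auto
    show ?thesis
    proof (rule that[of "b - beta (E0 + \<epsilon>)"])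
      show "0 < b - beta (E0 + \<epsilon>)" using lt by simp
      show "\<forall>y\<in>D. b - (b - beta (E0 + \<epsilon>)) < y \<and> y < b \<longrightarrow> Eb y < E0 + \<epsilon>"
      proof (intro ballI impI)
        fix y assume y: "y \<in> D" "b - (b - beta (E0 + \<epsilon>)) < y \<and> y < b"
        show "Eb y < E0 + \<epsilon>"
        proof (rule ccontr)
          assume "\<not> ?thesis"
          then have "beta (Eb y) \<le> beta (E0 + \<epsilon>)" using E0 \<epsilon> by (intro beta_anti) auto
          then show False using y gD_E[OF y(1)] by simp
        qed
      qed
    qed
  qed
  show "\<forall>\<^sub>F y in at b within D. dist (Eb y) (Eb b) < \<epsilon>"
  proof (unfold eventually_at, intro exI[of _ "min \<delta>1 \<delta>2"] conjI ballI impI)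
    show "0 < min \<delta>1 \<delta>2" using \<delta>1 \<delta>2 by simp
    fix y assume y: "y \<in> D" "y \<noteq> b \<and> dist y b < min \<delta>1 \<delta>2"
    show "dist (Eb y) (Eb b) < \<epsilon>"
    proof (cases "b < y")
      case True
      then have "Eb y \<le> E0" "E0 - \<epsilon> < Eb y" using Eb_anti[OF b y(1)] \<delta>1 y
        by (auto simp: E0_def dist_real_def)
      then show ?thesis by (simp add: E0_def dist_real_def)
    next
      case False
      then have "y < b" using y by auto
      then have "E0 \<le> Eb y" "Eb y < E0 + \<epsilon>" using Eb_anti[OF y(1) b] \<delta>2 y
        by (auto simp: E0_def dist_real_def)
      then show ?thesis by (simp add: E0_def dist_real_def)
    qed
  qed
qed

lemma z0_deriv:
  assumes b: "b \<in> D"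
  shows "(z0 n a has_real_derivative - Eb b) (at b within D)"
proof -
  have key: "norm ((z0 n a y - z0 n a b) / (y - b) - - Eb b) \<le> \<bar>Eb y - Eb b\<bar>"
    if y: "y \<in> D" "y \<noteq> b" for y
  proof -
    have k1: "Zf (Eb b) - Eb b * (y - b) \<le> Zf (Eb y)"
      using K1[of "Eb b" "Eb y"] gD_E b y by auto
    have k2: "Zf (Eb y) - Eb y * (b - y) \<le> Zf (Eb b)"
      using K1[of "Eb y" "Eb b"] gD_E b y by auto
    have z: "z0 n a y = Zf (Eb y)" "z0 n a b = Zf (Eb b)" using gD_E b y by auto
    show ?thesis
    proof (cases "b < y")
      case True
      then have "- Eb b \<le> (z0 n a y - z0 n a b) / (y - b)" "(z0 n a y - z0 n a b) / (y - b) \<le> - Eb y"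
        using k1 k2 z by (auto simp: field_simps)
      moreover have "Eb y \<le> Eb b" using Eb_anti b y True by simp
      ultimately show ?thesis by simp
    next
      case False
      then have lt: "y < b" using y by simp
      then have "(z0 n a y - z0 n a b) / (y - b) \<le> - Eb b" "- Eb y \<le> (z0 n a y - z0 n a b) / (y - b)"
        using k1 k2 z by (auto simp: field_simps)
      moreover have "Eb b \<le> Eb y" using Eb_anti b y lt by simp
      ultimately show ?thesis by simp
    qed
  qed
  have "((\<lambda>y. (z0 n a y - z0 n a b) / (y - b) - - Eb b) \<longlongrightarrow> 0) (at b within D)"
  proof (rule Lim_null_comparison)
    show "\<forall>\<^sub>F y in at b within D. norm ((z0 n a y - z0 n a b) / (y - b) - - Eb b) \<le> \<bar>Eb y - Eb b\<bar>"
      using key by (auto simp: eventually_at_filter)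
    have "((\<lambda>y. Eb y - Eb b) \<longlongrightarrow> Eb b - Eb b) (at b within D)"
      by (intro tendsto_intros Eb_cont b)
    then show "((\<lambda>y. \<bar>Eb y - Eb b\<bar>) \<longlongrightarrow> 0) (at b within D)"
      using tendsto_rabs by fastforce
  qed
  then show ?thesis
    unfolding has_field_derivative_iff by (rule LIM_zero_iff[THEN iffD1])
qed


lemma z0_gt1: "b \<in> D \<Longrightarrow> 1 < z0 n a b"
  using gD_E(1,3)[of b] Zf_gt1[of "Eb b"] by simp

lemma fd_Phi: "b \<in> D \<Longrightarrow> fd \<theta> b = \<theta> - 1 / Phi (Eb b)"
proof -
  assume b: "b \<in> D"
  have "Phi (Eb b) = z0 n a b / Eb b" using gD_E(1,3)[OF b] Phi_eq[of "Eb b"] by simp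
  then have "1 / Phi (Eb b) = Eb b / z0 n a b" by simp
  then show ?thesis by (simp add: fd_def)
qed

lemma f_deriv:
  assumes b: "b \<in> D"
  shows "(ff n a \<theta> has_real_derivative fd \<theta> b) (at b within D)"
proof -
  have z: "0 < z0 n a b" using z0_gt1[OF b] by simp
  have d1: "((\<lambda>b. ln (z0 n a b)) has_real_derivative (1 / z0 n a b) * (- Eb b)) (at b within D)"
    by (rule DERIV_chain2[OF DERIV_ln_divide[OF z] z0_deriv[OF b]])
  have "((\<lambda>b. \<theta> * b + ln (z0 n a b)) has_real_derivative \<theta> + (1 / z0 n a b) * (- Eb b)) (at b within D)"
    by (rule DERIV_add[OF DERIV_cmult_Id d1])
  moreover have "\<theta> + (1 / z0 n a b) * (- Eb b) = fd \<theta> b" by (simp add: fd_def)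
  moreover have "ff n a \<theta> = (\<lambda>b. \<theta> * b + ln (z0 n a b))" by (rule ext) (simp add: ff_def)
  ultimately show ?thesis by simp
qed

lemma f_deriv_at:
  assumes b: "0 < b"
  shows "(ff n a \<theta> has_real_derivative fd \<theta> b) (at b)"
proof -
  have "(ff n a \<theta> has_real_derivative fd \<theta> b) (at b within {0<..})"
    by (rule has_field_derivative_subset[OF f_deriv[OF gD_pos[OF b]]]) (use gD in \<open>auto simp: goodD_def\<close>)
  moreover have "at b within {0<..} = at b" by (rule at_within_open) (use b in auto)
  ultimately show ?thesis by metis
qed


lemma f_cont: "continuous_on D (ff n a \<theta>)"
  using f_deriv DERIV_continuous continuous_on_eq_continuous_within by blast

lemma z0_cont: "continuous_on D (z0 n a)"
  using z0_deriv DERIV_continuous continuous_on_eq_continuous_within by blast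

lemma fd_cont: "continuous_on D (fd \<theta>)"
proof -
  have "continuous_on D Eb"
    using Eb_cont continuous_on_def by blast
  moreover have nz: "\<And>x. x \<in> D \<Longrightarrow> z0 n a x \<noteq> 0" using z0_gt1 by fastforce
  ultimately show ?thesis unfolding fd_def[abs_def]
    using z0_cont by (intro continuous_intros) auto
qed

lemma fd_strict:
  assumes "b \<in> D" "y \<in> D" "b < y"
  shows "fd \<theta> b < fd \<theta> y"
proof -
  have "Eb y < Eb b" using Eb_strict assms by simp
  then have "Phi (Eb b) < Phi (Eb y)" using gD_E assms by (intro Phi_strict) auto
  then have "1 / Phi (Eb y) < 1 / Phi (Eb b)" using Phi_pos gD_E assms by (intro frac_less2) auto
  then show ?thesis using fd_Phi assms by simp
qed

lemma f_convex: "convex_on D (ff n a \<theta>)"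
proof (rule convex_from_deriv[where f' = "fd \<theta>"])
  show "{0<..} \<subseteq> D" "D \<subseteq> {0..}" using gD by (auto simp: goodD_def)
  show "continuous_on D (ff n a \<theta>)" by (rule f_cont)
  show "\<And>x. 0 < x \<Longrightarrow> (ff n a \<theta> has_real_derivative fd \<theta> x) (at x)" by (rule f_deriv_at)
  show "\<And>x y. 0 < x \<Longrightarrow> x \<le> y \<Longrightarrow> fd \<theta> x \<le> fd \<theta> y"
  proof -
    fix x y :: real assume "0 < x" "x \<le> y"
    then show "fd \<theta> x \<le> fd \<theta> y" using fd_strict[of x y] gD_pos[of x] gD_pos[of y]
      by (cases "x = y") auto
  qed
qed

lemma f_min:
  assumes bs: "bs \<in> D" and fbs: "fd \<theta> bs = 0 \<or> (bs = 0 \<and> 0 \<le> fd \<theta> bs)"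
    and b: "b \<in> D" "b \<noteq> bs"
  shows "ff n a \<theta> bs < ff n a \<theta> b"
proof (rule min_from_deriv[where f' = "fd \<theta>", OF _ _ f_cont _ bs _ _ b])
  show "{0<..} \<subseteq> D" "D \<subseteq> {0..}" using gD by (auto simp: goodD_def)
  show "\<And>x. 0 < x \<Longrightarrow> (ff n a \<theta> has_real_derivative fd \<theta> x) (at x)" by (rule f_deriv_at)
  show "0 < fd \<theta> x" if "0 < x" "bs < x" for x
    using fd_strict[OF bs gD_pos[OF that(1)] that(2)] fbs by auto
  show "fd \<theta> x < 0" if "0 < x" "x < bs" for x
    using fd_strict[OF gD_pos[OF that(1)] bs that(2)] fbs that by auto
qed

lemma f_INF:
  assumes bs: "bs \<in> D" and fbs: "fd \<theta> bs = 0 \<or> (bs = 0 \<and> 0 \<le> fd \<theta> bs)"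
  shows "ff n a \<theta> bs = (INF b\<in>D. ff n a \<theta> b)"
    and "\<forall>b\<in>D. ff n a \<theta> b = (INF b\<in>D. ff n a \<theta> b) \<longrightarrow> b = bs"
proof -
  have le: "ff n a \<theta> bs \<le> ff n a \<theta> b" if "b \<in> D" for b
    using f_min[OF bs fbs that] by (cases "b = bs") auto
  show eq: "ff n a \<theta> bs = (INF b\<in>D. ff n a \<theta> b)"
    by (rule cInf_eq_minimum[symmetric]) (use bs le in auto)
  show "\<forall>b\<in>D. ff n a \<theta> b = (INF b\<in>D. ff n a \<theta> b) \<longrightarrow> b = bs"
    using f_min[OF bs fbs] eq by force
qed

end

lemma feasible_nonneg: "feasible n a y \<Longrightarrow> i \<in> I \<Longrightarrow> 0 \<le> y i"
  unfolding feasible_def using one_I by (metis Idx_iff)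

lemma cand:
  assumes b: "0 < b" and k: "1 \<le> k" "k \<in> I" and E: "0 < E"
    and lo: "\<forall>i\<in>I. 2 \<le> i \<and> i \<le> k \<longrightarrow> 1 \<le> E * a i"
    and hi: "\<forall>i\<in>I. k < i \<longrightarrow> E * a i \<le> 1"
    and bet: "s k - d k * ln E = b"
  defines "x \<equiv> (\<lambda>i. if i \<in> T k then - ln (E * a i) / b else 0)"
  shows "is_minimizer n a b x" "xb n a b = x"
    "infsum (\<lambda>i. exp (- b * x i)) I = k + E * d k"
    "(\<lambda>i. exp (- b * x i)) summable_on I"
proof -
  have TI: "T k \<subseteq> I" by (rule T_sub)
  have ai: "0 < a i" if "i \<in> I" for i using apos that by auto
  have bx: "b * x i = - ln (E * a i)" if "i \<in> T k" for i
    using that b by (simp add: x_def)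
  have ex: "exp (- b * x i) = (if i \<in> T k then E * a i else 1)" for i
  proof (cases "i \<in> T k")
    case True
    then have "exp (- b * x i) = exp (ln (E * a i))" using bx[OF True] by simp
    also have "\<dots> = E * a i" using E ai True TI by auto
    finally show ?thesis using True by simp
  qed (simp add: x_def)
  have xnn: "0 \<le> x i" for i
  proof (cases "i \<in> T k")
    case True
    then have "E * a i \<le> 1" "0 < E * a i" using hi E ai TI by (auto simp: T_def)
    then have "ln (E * a i) \<le> 0" by simp
    then show ?thesis using True b by (simp add: x_def divide_nonpos_pos)
  qed (simp add: x_def)
  have Ik: "I = {1..k} \<union> T k" "{1..k} \<inter> T k = {}" "{1..k} \<subseteq> I"
    using k I_down[OF k(2)] by (auto simp: T_def Idx_iff)
  have ax_eq: "a i * x i = (if i \<in> T k then (1 / b) * (eta (a i) - ln E * a i) else 0)" for i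
  proof (cases "i \<in> T k")
    case True
    then have iI: "i \<in> I" using TI by auto
    have "a i * x i = (1 / b) * (a i * (b * x i))" using b by simp
    also have "a i * (b * x i) = eta (a i) - ln E * a i"
    proof -
      have h: "b * x i = - ln E - ln (a i)" using bx[OF True] E ai[OF iI] by (simp add: ln_mult)
      have "a i * (b * x i) = a i * (- ln E - ln (a i))" by (simp only: h)
      then show ?thesis using eta_a[OF iI] by (simp add: algebra_simps)
    qed
    finally show ?thesis using True by simp
  qed (simp add: x_def)
  have sT: "(\<lambda>i. (1 / b) * (eta (a i) - ln E * a i)) summable_on T k"
    by (intro summable_on_cmult_right summable_on_diff_real se sa TI)
  have ax_s: "(\<lambda>i. a i * x i) summable_on I"
    unfolding ax_eq using sT TI by (subst summable_on_cong_neutral[where T = "T k"]) auto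
  have "infsum (\<lambda>i. a i * x i) I = infsum (\<lambda>i. (1 / b) * (eta (a i) - ln E * a i)) (T k)"
    unfolding ax_eq using TI by (intro infsum_cong_neutral) auto
  also have "\<dots> = (1 / b) * (s k - ln E * d k)"
    unfolding s_def' d_def'
    by (subst infsum_cmult_right) (auto intro!: summable_on_diff_real se sa TI summable_on_cmult_right
        simp: infsum_diff_real[OF se[OF TI] summable_on_cmult_right[OF sa[OF TI]]] infsum_cmult_right[OF sa[OF TI]])
  also have "\<dots> = 1" using bet b by (simp add: algebra_simps)
  finally have ax_1: "infsum (\<lambda>i. a i * x i) I = 1" .
  have feas: "feasible n a x"
    unfolding feasible_def
  proof (intro conjI allI impI ballI ax_s ax_1)
    fix i assume "i \<notin> I" then show "x i = 0" using TI by (auto simp: x_def)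
  next
    fix i j assume ij: "i \<in> I" "j \<in> I" "i \<le> j"
    show "x i \<le> x j"
    proof (cases "i \<in> T k")
      case True
      then have jT: "j \<in> T k" using ij by (auto simp: T_def)
      have "a j \<le> a i" using I_mono ij by auto
      then have "ln (E * a j) \<le> ln (E * a i)" using E ai ij by simp
      then show ?thesis using True jT b by (simp add: x_def divide_right_mono)
    next
      case False
      then show ?thesis using xnn by (simp add: x_def)
    qed
  next
    show "x 1 = 0" using k by (simp add: x_def T_def)
  qed
  have e1: "(\<lambda>i. exp (- b * x i)) summable_on {1..k}" by simp
  have e2: "(\<lambda>i. exp (- b * x i)) summable_on T k"
    unfolding ex using TI by (subst summable_on_cong[where g = "\<lambda>i. E * a i"]) (auto intro!: summable_on_cmult_right sa)
  have es: "(\<lambda>i. exp (- b * x i)) summable_on I"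
    unfolding Ik(1) using e1 e2 by (rule summable_on_union)
  have "infsum (\<lambda>i. exp (- b * x i)) I = infsum (\<lambda>i. exp (- b * x i)) {1..k} + infsum (\<lambda>i. exp (- b * x i)) (T k)"
    unfolding Ik(1) using e1 e2 Ik(2) by (rule infsum_Un_disjoint)
  also have "infsum (\<lambda>i. exp (- b * x i)) {1..k} = k"
  proof -
    have "\<forall>i\<in>{1..k}. x i = 0" by (auto simp: x_def T_def)
    then show ?thesis by simp
  qed
  also have "infsum (\<lambda>i. exp (- b * x i)) (T k) = infsum (\<lambda>i. E * a i) (T k)"
    by (rule infsum_cong) (use ex in auto)
  also have "\<dots> = E * d k" unfolding d_def' by (rule infsum_cmult_right) (rule sa[OF TI])
  finally show eval: "infsum (\<lambda>i. exp (- b * x i)) I = k + E * d k" .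
  show "(\<lambda>i. exp (- b * x i)) summable_on I" by (rule es)
  have core: "infsum (\<lambda>i. exp (- b * x i)) I \<le> infsum (\<lambda>i. exp (- b * y i)) I \<and>
     (infsum (\<lambda>i. exp (- b * y i)) I \<le> infsum (\<lambda>i. exp (- b * x i)) I \<longrightarrow> y = x)"
    if fy: "feasible n a y" and sy: "(\<lambda>i. exp (- b * y i)) summable_on I" for y
  proof -
    have ay_s: "(\<lambda>i. a i * y i) summable_on I" and ay_1: "infsum (\<lambda>i. a i * y i) I = 1"
      using fy by (auto simp: feasible_def)
    have y0: "y i = 0" if "i \<notin> I" for i using fy that by (auto simp: feasible_def)
    have y1: "y 1 = 0" using fy by (auto simp: feasible_def)
    have ynn: "0 \<le> y i" if "i \<in> I" for i using feasible_nonneg[OF fy that] .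
    define r where "r i = exp (- b * y i) - exp (- b * x i) + E * b * (a i * y i - a i * x i)" for i
    have rr: "0 \<le> r i \<and> (r i = 0 \<longrightarrow> y i = x i)" if iI: "i \<in> I" for i
    proof (cases "i \<in> T k")
      case True
      let ?p = "E * a i"
      have p: "0 < ?p" using E ai[OF iI] by simp
      have "r i = exp (- (b * y i)) - ?p + ?p * (b * y i + ln ?p)"
        unfolding r_def using ex[of i] True bx[OF True] by (simp add: algebra_simps)
      moreover have "b * y i = b * x i \<Longrightarrow> y i = x i" using b by simp
      ultimately show ?thesis using tangent1[OF p, of "b * y i"] bx[OF True] by auto
    next
      case False
      then have xi: "x i = 0" by (simp add: x_def)
      show ?thesis
      proof (cases "i = 1")
        case True then show ?thesis using y1 xi by (simp add: r_def)
      next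
        case False
        then have "2 \<le> i" "i \<le> k" using iI \<open>i \<notin> T k\<close> by (auto simp: T_def Idx_iff)
        then have c: "1 \<le> E * a i" using lo iI by auto
        have u: "0 \<le> b * y i" using ynn[OF iI] b by simp
        have "r i = exp (- (b * y i)) - 1 + (E * a i) * (b * y i)"
          unfolding r_def using xi by (simp add: algebra_simps)
        then show ?thesis using tangent2[OF u c] xi b by auto
      qed
    qed
    have sr: "r summable_on I" unfolding r_def
      by (intro summable_on_add summable_on_diff_real summable_on_cmult_right sy es ay_s ax_s)
    have "infsum r I = infsum (\<lambda>i. exp (- b * y i)) I - infsum (\<lambda>i. exp (- b * x i)) I
        + E * b * (infsum (\<lambda>i. a i * y i) I - infsum (\<lambda>i. a i * x i) I)"
    proof -
      let ?A = "\<lambda>i. exp (- b * y i) - exp (- b * x i)" and ?B = "\<lambda>i. a i * y i - a i * x i"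
      have sA: "?A summable_on I" by (intro summable_on_diff_real sy es)
      have sB: "?B summable_on I" by (intro summable_on_diff_real ay_s ax_s)
      have "infsum r I = infsum ?A I + infsum (\<lambda>i. E * b * ?B i) I"
        unfolding r_def using sA sB by (intro infsum_add summable_on_cmult_right)
      also have "infsum (\<lambda>i. E * b * ?B i) I = E * b * infsum ?B I"
        using sB by (rule infsum_cmult_right)
      also have "infsum ?A I = infsum (\<lambda>i. exp (- b * y i)) I - infsum (\<lambda>i. exp (- b * x i)) I"
        using sy es by (rule infsum_diff_real)
      also have "infsum ?B I = infsum (\<lambda>i. a i * y i) I - infsum (\<lambda>i. a i * x i) I"
        using ay_s ax_s by (rule infsum_diff_real)
      finally show ?thesis .
    qed
    then have ir: "infsum r I = infsum (\<lambda>i. exp (- b * y i)) I - infsum (\<lambda>i. exp (- b * x i)) I"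
      using ay_1 ax_1 by simp
    have "0 \<le> infsum r I" using rr by (intro infsum_nonneg) auto
    then have le: "infsum (\<lambda>i. exp (- b * x i)) I \<le> infsum (\<lambda>i. exp (- b * y i)) I" using ir by simp
    have "y = x" if ge: "infsum (\<lambda>i. exp (- b * y i)) I \<le> infsum (\<lambda>i. exp (- b * x i)) I"
    proof
      fix i show "y i = x i"
      proof (cases "i \<in> I")
        case True
        have "infsum r I \<le> 0" using ir ge by simp
        then have "r i = 0" using nonneg_infsum_le_0D[OF _ sr _ True] rr by auto
        then show ?thesis using rr True by auto
      next
        case False then show ?thesis using y0 TI by (auto simp: x_def)
      qed
    qed
    then show ?thesis using le by blast
  qed
  show mini: "is_minimizer n a b x"
    unfolding is_minimizer_def using feas es core by blast
  show "xb n a b = x"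
    unfolding xb_def
  proof (rule the_equality[where P = "is_minimizer n a b", OF mini])
    fix y assume "is_minimizer n a b y"
    then have "feasible n a y" "(\<lambda>i. exp (- b * y i)) summable_on I"
      "infsum (\<lambda>i. exp (- b * y i)) I \<le> infsum (\<lambda>i. exp (- b * x i)) I"
      using feas es unfolding is_minimizer_def by blast+
    then show "y = x" using core by blast
  qed
qed

lemma d_tend: "d \<longlonglongrightarrow> 0"
proof -
  have "(\<lambda>k. infsum a {i\<in>I. k < i}) \<longlonglongrightarrow> 0"
    using asum apos by (intro tail0) (auto simp: less_imp_le)
  moreover have "dd n a = (\<lambda>k. infsum a {i\<in>I. k < i})" by (rule ext) (simp add: dd_def)
  ultimately show ?thesis by simp
qed

lemma s_tend: "s \<longlonglongrightarrow> 0"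
proof -
  have "(\<lambda>k. infsum (\<lambda>i. eta (a i)) {i\<in>I. k < i}) \<longlonglongrightarrow> 0"
    using eta_sum eta_a_nonneg by (intro tail0) auto
  moreover have "ss n a = (\<lambda>k. infsum (\<lambda>i. eta (a i)) {i\<in>I. k < i})" by (rule ext) (simp add: ss_def)
  ultimately show ?thesis by simp
qed

lemma g_step:
  assumes "1 \<le> k" "Suc k \<in> I"
  shows "g (Suc k) \<le> g k"
proof -
  have kI: "k \<in> I" using assms I_down by auto
  have "a (Suc k) \<le> a k" using I_mono[OF kI assms(2)] by simp
  then have "real k * a (Suc k) \<le> real k * a k" by (simp add: mult_left_mono)
  then show ?thesis using d_step[OF assms(2)] by (simp add: g_def algebra_simps)
qed

lemma g_anti:
  assumes "1 \<le> i" "i \<le> j" "j \<in> I"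
  shows "g j \<le> g i"
  using assms(2,3)
proof (induction j rule: dec_induct)
  case base then show ?case by simp
next
  case (step j)
  then have "j \<in> I" using I_down assms(1) by auto
  then have "g j \<le> g i" using step by simp
  moreover have "g (Suc j) \<le> g j" using step assms(1) by (intro g_step) auto
  ultimately show ?case by simp
qed

lemma g1: "g 1 = d 0"
  using d_step[of 0] one_I by (simp add: g_def)

lemma g_nonneg: "k \<in> I \<Longrightarrow> 0 \<le> g k"
  using d_nonneg[of k] apos by (auto simp: g_def less_imp_le)

lemma ka_bound:
  assumes kI: "k \<in> I"
  shows "real k * a k \<le> 2 * d (k div 2)"
proof -
  define h where "h = k div 2"
  have sub: "{h<..k} \<subseteq> T h" using I_down[OF kI] by (auto simp: T_def)
  have "real (card {h<..k}) * a k = (\<Sum>i\<in>{h<..k}. a k)" by simp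
  also have "\<dots> \<le> (\<Sum>i\<in>{h<..k}. a i)"
    using I_mono[OF _ kI] sub by (intro sum_mono) (auto simp: T_def)
  also have "\<dots> \<le> d h" unfolding d_def'
    using sub apos T_sub by (intro finite_sum_le_infsum sa) (auto simp: less_imp_le subset_iff)
  finally have "real (k - h) * a k \<le> d h" by simp
  moreover have "real k \<le> 2 * real (k - h)" by (simp add: h_def)
  moreover have "0 \<le> a k" using apos kI by (simp add: less_imp_le)
  ultimately have "real k * a k \<le> 2 * real (k - h) * a k" by (simp add: mult_right_mono)
  also have "\<dots> \<le> 2 * d h" using \<open>real (k - h) * a k \<le> d h\<close> by simp
  finally show ?thesis by (simp add: h_def)
qed

lemma d_fin_end: "n = enat N \<Longrightarrow> d N = 0"
proof -
  assume N: "n = enat N"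
  have "T N = {}" unfolding T_def Idx_def using N by auto
  then show ?thesis unfolding d_def' by simp
qed

lemma m_props:
  assumes th: "0 < \<theta>"
    and fin: "finite {k. 1 \<le> k \<and> enat (k + 1) \<le> n \<and> 1 / \<theta> \<le> d k + real k * a k}"
    and caseB: "\<And>N. n = enat N \<Longrightarrow> a N * real N < 1 / \<theta>"
  shows "1 \<le> mm n a \<theta>" "Suc (mm n a \<theta>) \<in> I"
    "2 \<le> mm n a \<theta> \<Longrightarrow> 1 \<le> \<theta> * g (mm n a \<theta>)" "\<theta> * g (Suc (mm n a \<theta>)) < 1"
proof -
  have d0: "0 < d 0" using d_pos[of 0] one_I by simp
  let ?S = "{k. 1 \<le> k \<and> enat (k + 1) \<le> n \<and> 1 / \<theta> \<le> d k + real k * a k}"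
  have "1 \<le> mm n a \<theta> \<and> Suc (mm n a \<theta>) \<in> I \<and> (2 \<le> mm n a \<theta> \<longrightarrow> 1 \<le> \<theta> * g (mm n a \<theta>))
        \<and> \<theta> * g (Suc (mm n a \<theta>)) < 1"
  proof (cases "\<theta> < 1 / d 0")
    case True
    then have m1: "mm n a \<theta> = 1" by (simp add: mm_def)
    have "g 2 \<le> g 1" using g_anti[of 1 2] two_I by simp
    then have "\<theta> * g 2 \<le> \<theta> * d 0" using g1 th by simp
    also have "\<theta> * d 0 < 1" using True d0 by (simp add: field_simps)
    finally show ?thesis using m1 two_I by (simp add: numeral_2_eq_2)
  next
    case False
    then have m: "mm n a \<theta> = Max ?S" by (simp add: mm_def)
    have "1 \<in> ?S"
    proof -
      have "1 / \<theta> \<le> d 0" using False d0 th by (simp add: field_simps not_less)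
      moreover have "enat 2 \<le> n" using n2 by (simp add: numeral_eq_enat)
      ultimately show ?thesis using g1 by (simp add: g_def numeral_2_eq_2)
    qed
    then have "Max ?S \<in> ?S" using fin by (intro Max_in) auto
    then have mS: "1 \<le> mm n a \<theta>" "enat (mm n a \<theta> + 1) \<le> n" "1 / \<theta> \<le> g (mm n a \<theta>)"
      using m by (auto simp: g_def)
    have mI: "Suc (mm n a \<theta>) \<in> I" using mS by (simp add: Idx_iff)
    have gm: "1 \<le> \<theta> * g (mm n a \<theta>)" using mS th by (simp add: field_simps)
    have "\<theta> * g (Suc (mm n a \<theta>)) < 1"
    proof (cases "enat (Suc (mm n a \<theta>) + 1) \<le> n")
      case True
      have "Suc (mm n a \<theta>) \<notin> ?S"
      proof
        assume "Suc (mm n a \<theta>) \<in> ?S"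
        then have "Suc (mm n a \<theta>) \<le> Max ?S" using fin by (intro Max_ge) auto
        then show False using m by simp
      qed
      then have "\<not> 1 / \<theta> \<le> g (Suc (mm n a \<theta>))" using True by (simp add: g_def)
      then show ?thesis using th by (simp add: field_simps not_le)
    next
      case False
      then obtain N where N: "n = enat N" using mS by (cases n) auto
      then have NN: "N = Suc (mm n a \<theta>)" using False mS by simp
      have "g N = real N * a N" using d_fin_end[OF N] by (simp add: g_def)
      then have "g N < 1 / \<theta>" using caseB[OF N] by (simp add: mult.commute)
      then show ?thesis using th NN by (simp add: field_simps)
    qed
    then show ?thesis using mS mI gm by simp
  qed
  then show "1 \<le> mm n a \<theta>" "Suc (mm n a \<theta>) \<in> I"
    "2 \<le> mm n a \<theta> \<Longrightarrow> 1 \<le> \<theta> * g (mm n a \<theta>)" "\<theta> * g (Suc (mm n a \<theta>)) < 1"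
    by auto
qed

lemma mstar:
  assumes th: "0 < \<theta>" and m1: "1 \<le> m" and mI: "Suc m \<in> I"
    and gm: "2 \<le> m \<Longrightarrow> 1 \<le> \<theta> * g m" and gm1: "\<theta> * g (Suc m) < 1"
  defines "Es \<equiv> \<theta> * m / (1 - \<theta> * d m)"
  shows "0 < 1 - \<theta> * d m" "0 < Es"
    "\<forall>i\<in>I. 2 \<le> i \<and> i \<le> m \<longrightarrow> 1 \<le> Es * a i"
    "\<forall>i\<in>I. m < i \<longrightarrow> Es * a i \<le> 1"
    "beta Es = s m + d m * ln ((1 - \<theta> * d m) / (\<theta> * real m))"
    "0 < s m + d m * ln ((1 - \<theta> * d m) / (\<theta> * real m))"
    "Zf Es = m / (1 - \<theta> * d m)"
    "Es = \<theta> * (m + Es * d m)"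
    "s m - d m * ln Es = s m + d m * ln ((1 - \<theta> * d m) / (\<theta> * real m))"
proof -
  have mI': "m \<in> I" using I_down[OF mI] m1 by auto
  have am1: "0 < a (Suc m)" using apos mI by auto
  have dstep: "d m = a (Suc m) + d (Suc m)" by (rule d_step[OF mI])
  have g1': "g (Suc m) = d m + real m * a (Suc m)" using dstep by (simp add: g_def algebra_simps)
  have "d m \<le> g (Suc m)" using g1' am1 by simp
  then have "\<theta> * d m < 1" using gm1 th by (smt (verit) mult_left_mono)
  then show pos: "0 < 1 - \<theta> * d m" by simp
  show Es0: "0 < Es" unfolding Es_def using pos th m1 by simp
  have hi1: "Es * a (Suc m) < 1"
  proof -
    have "\<theta> * (real m * a (Suc m)) < 1 - \<theta> * d m" using gm1 g1' by (simp add: algebra_simps)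
    then show ?thesis unfolding Es_def using pos by (simp add: field_simps)
  qed
  show lo: "\<forall>i\<in>I. 2 \<le> i \<and> i \<le> m \<longrightarrow> 1 \<le> Es * a i"
  proof (intro ballI impI)
    fix i assume i: "i \<in> I" "2 \<le> i \<and> i \<le> m"
    then have "1 \<le> \<theta> * g m" using gm by simp
    then have "1 - \<theta> * d m \<le> \<theta> * real m * a m" by (simp add: g_def algebra_simps)
    then have "1 \<le> Es * a m" unfolding Es_def using pos by (simp add: field_simps)
    moreover have "a m \<le> a i" using I_mono[OF i(1) mI'] i by simp
    ultimately show "1 \<le> Es * a i" using Es0 by (smt (verit) mult_left_mono)
  qed
  show hi: "\<forall>i\<in>I. m < i \<longrightarrow> Es * a i \<le> 1"
  proof (intro ballI impI)
    fix i assume i: "i \<in> I" "m < i"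
    then have "a i \<le> a (Suc m)" using I_mono[OF mI i(1)] by simp
    then show "Es * a i \<le> 1" using hi1 Es0 by (smt (verit) mult_left_mono)
  qed
  have lnE: "ln Es = - ln ((1 - \<theta> * d m) / (\<theta> * real m))"
    unfolding Es_def using pos th m1 by (simp add: ln_div)
  show eqb: "s m - d m * ln Es = s m + d m * ln ((1 - \<theta> * d m) / (\<theta> * real m))"
    using lnE by simp
  show bE: "beta Es = s m + d m * ln ((1 - \<theta> * d m) / (\<theta> * real m))"
    using split_beta[OF m1 mI' Es0 lo hi] eqb by simp
  have "beta (Es + 1) < beta Es"
    using beta_strict[OF Es0, of "Es + 1" "Suc m"] hi1 mI m1 by (simp add: J_def)
  then show "0 < s m + d m * ln ((1 - \<theta> * d m) / (\<theta> * real m))"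
    using beta_nonneg[of "Es + 1"] bE by simp
  have "Zf Es = m + Es * d m" by (rule split_Zf[OF m1 mI' Es0 lo hi])
  also have "\<dots> = m / (1 - \<theta> * d m)" unfolding Es_def using pos by (simp add: field_simps)
  finally show "Zf Es = m / (1 - \<theta> * d m)" .
  show "Es = \<theta> * (m + Es * d m)" unfolding Es_def using pos by (simp add: field_simps)
qed

lemma f_top:
  assumes th: "0 < \<theta>" and D: "\<And>b. b \<in> D \<Longrightarrow> 1 < z0 n a b" and Dt: "\<And>b. 0 < b \<Longrightarrow> b \<in> D"
  shows "filterlim (ff n a \<theta>) at_top at_top"
proof (rule filterlim_at_top_mono)
  show "LIM x at_top. \<theta> * x :> at_top"
    by (rule filterlim_tendsto_pos_mult_at_top[OF tendsto_const th filterlim_ident])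
  have "eventually (\<lambda>b::real. 0 < b) at_top" by simp
  then show "\<forall>\<^sub>F x in at_top. \<theta> * x \<le> ff n a \<theta> x"
  proof (rule eventually_mono)
    fix b :: real assume "0 < b"
    then have "1 < z0 n a b" using D Dt by blast
    then show "\<theta> * b \<le> ff n a \<theta> b" by (simp add: ff_def)
  qed
qed

context
  fixes N assumes nN: "n = enat N"
begin

lemma N2: "2 \<le> N" using n2 nN by (simp add: numeral_eq_enat)
lemma NI: "N \<in> I" using nN N2 by (simp add: Idx_iff)
lemma NJ: "N \<in> J" using NI N2 by (simp add: J_def)
lemma I_fin: "I = {1..N}" using nN by (auto simp: Idx_def)
lemma J_fin: "J = {2..N}" unfolding J_def Idx_def using nN by auto
lemma tN: "the_enat n = N" using nN by simp

lemma beta_N: "beta (1 / a N) = 0"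
  unfolding beta_def
proof (rule infsum_0)
  fix i assume i: "i \<in> J"
  have aN: "0 < a N" using apos NI by auto
  have "a N \<le> a i" using I_mono[OF _ NI] i by (auto simp: J_fin I_fin)
  then have "1 \<le> 1 / a N * a i" using aN by (simp add: field_simps)
  then show "a i * max 0 (- ln (1 / a N * a i)) = 0" by simp
qed

lemma Zf_N: "Zf (1 / a N) = N"
proof -
  have aN: "0 < a N" using apos NI by auto
  have "infsum (\<lambda>i. min 1 (1 / a N * a i)) J = infsum (\<lambda>_. 1) J"
  proof (rule infsum_cong)
    fix i assume i: "i \<in> J"
    have "a N \<le> a i" using I_mono[OF _ NI] i by (auto simp: J_fin I_fin)
    then have "1 \<le> 1 / a N * a i" using aN by (simp add: field_simps)
    then show "min 1 (1 / a N * a i) = 1" by simp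
  qed
  also have "\<dots> = real N - 1" using N2 by (simp add: J_fin)
  finally show ?thesis by (simp add: Zf_def)
qed

lemma fin_goodD: "goodD {0..}"
  unfolding goodD_def
proof (intro conjI ballI allI impI)
  have aN: "0 < a N" using apos NI by auto
  have reg: "0 < Eb b \<and> beta (Eb b) = b \<and> z0 n a b = Zf (Eb b)" if b: "0 < b" for b
  proof (rule Eb_region[OF b])
    have "N - 1 \<in> Kset" using N2 NI by (simp add: Kset_iff)
    moreover have "bb n a (N - 1 + 1) = 0" using N2 NI bb_beta[of N] beta_N by simp
    ultimately show "\<exists>j\<in>Kset. bb n a (j + 1) \<le> b" using b by force
  qed
  have E0: "Eb 0 = 1 / a N" by (simp add: Eb_def tN)
  fix b :: real assume b: "b \<in> {0..}"
  show "0 < Eb b" using reg E0 aN b by (cases "b = 0") auto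
  show "beta (Eb b) = b" using reg E0 beta_N b by (cases "b = 0") auto
  show "z0 n a b = Zf (Eb b)" using reg E0 Zf_N b tN by (cases "b = 0") (auto simp: z0_def)
  fix E assume E: "0 < E \<and> E < Eb b"
  show "\<exists>j\<in>J. E * a j < 1"
  proof (cases "b = 0")
    case True
    then have "E * a N < 1" using E E0 aN by (simp add: field_simps)
    then show ?thesis using NJ by blast
  next
    case False
    then show ?thesis using reg[of b] b E by (intro wit_pos[of b]) auto
  qed
qed (auto)

lemma caseA_limits:
  defines "mt \<equiv> N - Max {k. 1 \<le> k \<and> k \<le> N - 1 \<and> a (N - k + 1) = a N}"
  shows "\<forall>i. 1 \<le> i \<and> i \<le> mt \<longrightarrow> ((\<lambda>b. xb n a b i) \<longlongrightarrow> 0) (at_right 0)"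
    "\<forall>i. mt < i \<and> i \<le> N \<longrightarrow> ((\<lambda>b. xb n a b i) \<longlongrightarrow> 1 / (a N * real (N - mt))) (at_right 0)"
proof -
  define S where "S = {k. 1 \<le> k \<and> k \<le> N - 1 \<and> a (N - k + 1) = a N}"
  define M where "M = Max S"
  have finS: "finite S" unfolding S_def by (rule finite_subset[of _ "{..N}"]) auto
  have "1 \<in> S" using N2 by (simp add: S_def)
  then have MS: "M \<in> S" unfolding M_def using finS by (intro Max_in) auto
  then have M1: "1 \<le> M" "M \<le> N - 1" "a (N - M + 1) = a N" by (auto simp: S_def)
  have mtM: "mt = N - M" by (simp add: mt_def S_def M_def)
  have mt1: "1 \<le> mt" "mt \<le> N - 1" "N - mt = M" using M1 N2 mtM by auto
  have mtI: "mt \<in> I" using mt1 by (simp add: I_fin)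
  define \<alpha> where "\<alpha> = a N"
  have \<alpha>: "0 < \<alpha>" using apos NI by (simp add: \<alpha>_def)
  have eqa: "a i = \<alpha>" if "i \<in> I" "mt < i" for i
  proof -
    have iN: "i \<le> N" using that by (simp add: I_fin)
    have "N - M + 1 \<in> I" using M1 N2 by (simp add: I_fin)
    then have "a i \<le> a (N - M + 1)" using I_mono that mtM by auto
    moreover have "a N \<le> a i" using I_mono[OF that(1) NI] iN by simp
    ultimately show ?thesis using M1 by (simp add: \<alpha>_def)
  qed
  have gt: "\<alpha> < a mt" if "2 \<le> mt"
  proof -
    have "\<alpha> \<le> a mt" using I_mono[OF mtI NI] mt1 by (simp add: \<alpha>_def)
    moreover have "a mt \<noteq> \<alpha>"
    proof
      assume eq: "a mt = \<alpha>"
      have e1: "N - (M + 1) + 1 = mt" "M + 1 \<le> N - 1" using that mtM M1 by auto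
      have "M + 1 \<in> S" unfolding S_def using e1 eq by (simp add: \<alpha>_def)
      then have "M + 1 \<le> M" unfolding M_def using finS by (simp add: Max_ge)
      then show False by simp
    qed
    ultimately show ?thesis by simp
  qed
  have MA: "0 < real M * \<alpha>" using M1 \<alpha> by simp
  define \<delta> where "\<delta> = (if 2 \<le> mt then real M * \<alpha> * ln (a mt / \<alpha>) else 1)"
  have \<delta>: "0 < \<delta>"
  proof (cases "2 \<le> mt")
    case True
    then have "1 < a mt / \<alpha>" using gt \<alpha> by simp
    then have "0 < ln (a mt / \<alpha>)" by simp
    then show ?thesis using True MA by (simp add: \<delta>_def)
  qed (simp add: \<delta>_def)
  have TmtF: "T mt = {mt<..N}" using mt1 by (auto simp: T_def I_fin)
  have dmt: "d mt = real M * \<alpha>"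
  proof -
    have "d mt = sum a {mt<..N}" unfolding d_def' TmtF by simp
    also have "\<dots> = sum (\<lambda>_. \<alpha>) {mt<..N}" using eqa by (intro sum.cong) (auto simp: I_fin)
    finally show ?thesis using mt1 by simp
  qed
  have smt: "s mt = - real M * \<alpha> * ln \<alpha>"
  proof -
    have "s mt = sum (\<lambda>i. eta (a i)) {mt<..N}" unfolding s_def' TmtF by simp
    also have "\<dots> = sum (\<lambda>_. - \<alpha> * ln \<alpha>) {mt<..N}"
      using eqa \<alpha> by (intro sum.cong) (auto simp: I_fin eta_def)
    finally show ?thesis using mt1 by simp
  qed
  have xbv: "xb n a b = (\<lambda>i. if i \<in> T mt then 1 / (real M * \<alpha>) else 0)" if b: "0 < b" "b < \<delta>" for b
  proof -
    define E where "E = exp (- b / (real M * \<alpha>)) / \<alpha>"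
    have E0: "0 < E" using \<alpha> by (simp add: E_def)
    have Ea: "E * \<alpha> = exp (- b / (real M * \<alpha>))" using \<alpha> by (simp add: E_def)
    have lnE: "ln E = - b / (real M * \<alpha>) - ln \<alpha>" using \<alpha> by (simp add: E_def ln_div)
    have lo: "\<forall>i\<in>I. 2 \<le> i \<and> i \<le> mt \<longrightarrow> 1 \<le> E * a i"
    proof (intro ballI impI)
      fix i assume i: "i \<in> I" "2 \<le> i \<and> i \<le> mt"
      then have m2: "2 \<le> mt" by simp
      have amt: "\<alpha> < a mt" using gt[OF m2] .
      have "b < real M * \<alpha> * ln (a mt / \<alpha>)" using b m2 by (simp add: \<delta>_def)
      then have "b / (real M * \<alpha>) < ln (a mt / \<alpha>)" using MA by (simp add: field_simps)
      then have "0 < ln (a mt / \<alpha>) - b / (real M * \<alpha>)" by simp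
      also have "ln (a mt / \<alpha>) - b / (real M * \<alpha>) = ln (E * a mt)"
        using \<alpha> amt E0 lnE by (simp add: ln_mult ln_div)
      finally have "1 < E * a mt" using E0 amt \<alpha> by (simp add: ln_gt_zero_iff)
      moreover have "a mt \<le> a i" using I_mono[OF i(1) mtI] i by simp
      ultimately show "1 \<le> E * a i" using E0 by (smt (verit) mult_left_mono)
    qed
    have hi: "\<forall>i\<in>I. mt < i \<longrightarrow> E * a i \<le> 1"
    proof (intro ballI impI)
      fix i assume "i \<in> I" "mt < i"
      then have "E * a i = exp (- b / (real M * \<alpha>))" using eqa Ea by simp
      also have "\<dots> \<le> 1" using b MA by simp
      finally show "E * a i \<le> 1" .
    qed
    have bet: "s mt - d mt * ln E = b"
    proof -
      have ne: "real M * \<alpha> \<noteq> 0" using MA by linarith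
      have "real M * \<alpha> * (b / (real M * \<alpha>)) = b"
        using ne by (metis nonzero_mult_div_cancel_left times_divide_eq_right)
      then show ?thesis unfolding smt dmt lnE by (simp add: algebra_simps)
    qed
    have "xb n a b = (\<lambda>i. if i \<in> T mt then - ln (E * a i) / b else 0)"
      by (rule cand(2)[OF b(1) mt1(1) mtI E0 lo hi bet])
    also have "\<dots> = (\<lambda>i. if i \<in> T mt then 1 / (real M * \<alpha>) else 0)"
    proof (rule ext)
      fix i show "(if i \<in> T mt then - ln (E * a i) / b else 0) = (if i \<in> T mt then 1 / (real M * \<alpha>) else 0)"
      proof (cases "i \<in> T mt")
        case True
        then have "E * a i = exp (- b / (real M * \<alpha>))" using eqa Ea by (auto simp: T_def)
        then show ?thesis using True b MA by simp
      qed simp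
    qed
    finally show ?thesis .
  qed
  have ev: "eventually (\<lambda>b. xb n a b = (\<lambda>i. if i \<in> T mt then 1 / (real M * \<alpha>) else 0)) (at_right 0)"
    using eventually_at_right_real[OF \<delta>] by (rule eventually_mono) (auto intro: xbv)
  show "\<forall>i. 1 \<le> i \<and> i \<le> mt \<longrightarrow> ((\<lambda>b. xb n a b i) \<longlongrightarrow> 0) (at_right 0)"
  proof (intro allI impI)
    fix i assume i: "1 \<le> i \<and> i \<le> mt"
    then have "i \<notin> T mt" by (simp add: T_def)
    then show "((\<lambda>b. xb n a b i) \<longlongrightarrow> 0) (at_right 0)"
      using ev by (intro tendsto_eventually) (auto elim: eventually_mono)
  qed
  show "\<forall>i. mt < i \<and> i \<le> N \<longrightarrow> ((\<lambda>b. xb n a b i) \<longlongrightarrow> 1 / (a N * real (N - mt))) (at_right 0)"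
  proof (intro allI impI)
    fix i assume i: "mt < i \<and> i \<le> N"
    then have "i \<in> T mt" using mt1 by (simp add: T_def I_fin)
    moreover have "1 / (a N * real (N - mt)) = 1 / (real M * \<alpha>)" using mt1 by (simp add: \<alpha>_def mult.commute)
    ultimately show "((\<lambda>b. xb n a b i) \<longlongrightarrow> 1 / (a N * real (N - mt))) (at_right 0)"
      using ev by (intro tendsto_eventually) (auto elim: eventually_mono)
  qed
qed

end

lemma caseB_bundle:
  assumes gD: "goodD D" and th: "0 < \<theta>" and m1: "1 \<le> m" and mI: "Suc m \<in> I"
    and gm: "2 \<le> m \<Longrightarrow> 1 \<le> \<theta> * g m" and gm1: "\<theta> * g (Suc m) < 1"
  defines "bs \<equiv> s m + d m * ln ((1 - \<theta> * d m) / (\<theta> * real m))"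
  shows "0 < bs" "bs \<in> D" "fd \<theta> bs = 0"
    "ff n a \<theta> bs = bs * \<theta> + ln (real m / (1 - d m * \<theta>))"
    "xb n a bs = (\<lambda>i. if i \<in> T m then 1 / bs * ln ((1 - \<theta> * d m) / (a i * \<theta> * real m)) else 0)"
    "(\<lambda>i. exp (- bs * xb n a bs i)) summable_on I"
    "(\<lambda>i. xb n a bs i * exp (- bs * xb n a bs i)) summable_on I"
    "infsum (\<lambda>i. xb n a bs i * exp (- bs * xb n a bs i)) I = \<theta> * infsum (\<lambda>i. exp (- bs * xb n a bs i)) I"
proof -
  define Es where "Es = \<theta> * m / (1 - \<theta> * d m)"
  note ms = mstar[OF th m1 mI gm gm1, folded Es_def bs_def]
  have mI': "m \<in> I" using I_down[OF mI] m1 by auto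
  show bs0: "0 < bs" using ms(6) .
  show bsD: "bs \<in> D" using gD_pos[OF gD bs0] .
  have b1: "beta (Eb bs) = bs" by (rule gD_E(2)[OF gD bsD])
  have EbE: "Eb bs = Es"
  proof (rule beta_inj[OF gD_E(1)[OF gD bsD] ms(2)])
    show "beta (Eb bs) = beta Es" using b1 ms(5) by simp
    show "0 < beta (Eb bs)" using b1 bs0 by simp
  qed
  have z: "z0 n a bs = m / (1 - \<theta> * d m)" using gD_E(3)[OF gD bsD] ms(7) unfolding EbE by simp
  show "fd \<theta> bs = 0"
  proof -
    have "Es * (1 - \<theta> * d m) = Es - \<theta> * (Es * d m)" by (simp add: algebra_simps)
    also have "\<dots> = \<theta> * m" using ms(8) by (simp add: algebra_simps)
    finally have e1: "Es * (1 - \<theta> * d m) = \<theta> * m" .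
    have "Es / (m / (1 - \<theta> * d m)) = Es * (1 - \<theta> * d m) / m" by simp
    also have "\<dots> = \<theta>" using e1 m1 by simp
    finally have "Es / (m / (1 - \<theta> * d m)) = \<theta>" .
    then show ?thesis unfolding fd_def z EbE by simp
  qed
  show "ff n a \<theta> bs = bs * \<theta> + ln (real m / (1 - d m * \<theta>))"
  proof -
    have "ff n a \<theta> bs = \<theta> * bs + ln (z0 n a bs)" by (simp add: ff_def)
    also have "z0 n a bs = real m / (1 - d m * \<theta>)" unfolding z by (simp add: mult.commute)
    finally show ?thesis by (simp add: mult.commute)
  qed
  have bet: "s m - d m * ln Es = bs" using ms(9) .
  note c = cand[OF bs0 m1 mI' ms(2,3,4) bet]
  let ?x = "\<lambda>i. if i \<in> T m then - ln (Es * a i) / bs else 0"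
  have xeq: "xb n a bs = ?x" using c(2) .
  show "xb n a bs = (\<lambda>i. if i \<in> T m then 1 / bs * ln ((1 - \<theta> * d m) / (a i * \<theta> * real m)) else 0)"
    unfolding xeq
  proof (rule ext)
    fix i show "?x i = (if i \<in> T m then 1 / bs * ln ((1 - \<theta> * d m) / (a i * \<theta> * real m)) else 0)"
    proof (cases "i \<in> T m")
      case True
      then have ai: "0 < a i" using apos T_sub by auto
      have ne: "1 - \<theta> * d m \<noteq> 0" "a i \<noteq> 0" "\<theta> \<noteq> 0" "real m \<noteq> 0" using ms(1) th m1 ai by auto
      have "1 / (Es * a i) = (1 - \<theta> * d m) / (\<theta> * real m * a i)" unfolding Es_def using ne by simp
      also have "\<dots> = (1 - \<theta> * d m) / (a i * \<theta> * real m)" by (simp add: ac_simps)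
      finally have "(1 - \<theta> * d m) / (a i * \<theta> * real m) = 1 / (Es * a i)" by simp
      then have "ln ((1 - \<theta> * d m) / (a i * \<theta> * real m)) = - ln (Es * a i)"
        using ms(2) ai by (simp add: ln_div)
      then show ?thesis using True by simp
    qed simp
  qed
  show es: "(\<lambda>i. exp (- bs * xb n a bs i)) summable_on I" using c(4) xeq by simp
  have feas: "feasible n a (xb n a bs)" using c(1) xeq by (simp add: is_minimizer_def)
  then have ax: "(\<lambda>i. a i * xb n a bs i) summable_on I" "infsum (\<lambda>i. a i * xb n a bs i) I = 1"
    by (auto simp: feasible_def)
  have xe: "xb n a bs i * exp (- bs * xb n a bs i) = Es * (a i * xb n a bs i)" for i
  proof (cases "i \<in> T m")
    case True
    then have ai: "0 < a i" using apos T_sub by auto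
    have "- bs * xb n a bs i = ln (Es * a i)" using True bs0 xeq by simp
    then have "exp (- bs * xb n a bs i) = Es * a i" using ms(2) ai by simp
    then show ?thesis by simp
  next
    case False then show ?thesis using xeq by simp
  qed
  show "(\<lambda>i. xb n a bs i * exp (- bs * xb n a bs i)) summable_on I"
    unfolding xe by (intro summable_on_cmult_right ax)
  have "infsum (\<lambda>i. xb n a bs i * exp (- bs * xb n a bs i)) I = Es"
    unfolding xe using ax by (simp add: infsum_cmult_right)
  also have "\<dots> = \<theta> * (m + Es * d m)" using ms(8) .
  also have "m + Es * d m = infsum (\<lambda>i. exp (- bs * xb n a bs i)) I" using c(3) xeq by simp
  finally show "infsum (\<lambda>i. xb n a bs i * exp (- bs * xb n a bs i)) I = \<theta> * infsum (\<lambda>i. exp (- bs * xb n a bs i)) I" .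
qed

lemma Zf_at: "1 \<le> k \<Longrightarrow> k \<in> I \<Longrightarrow> Zf (1 / a k) = k + d k / a k"
proof -
  assume k: "1 \<le> k" "k \<in> I"
  have ak: "0 < a k" using apos k by auto
  have "Zf (1 / a k) = k + 1 / a k * d k"
  proof (rule split_Zf[OF k])
    show "0 < 1 / a k" using ak by simp
    show "\<forall>i\<in>I. 2 \<le> i \<and> i \<le> k \<longrightarrow> 1 \<le> 1 / a k * a i"
      using I_mono[OF _ k(2)] ak by (auto simp: field_simps)
    show "\<forall>i\<in>I. k < i \<longrightarrow> 1 / a k * a i \<le> 1"
      using I_mono[OF k(2)] ak by (auto simp: field_simps)
  qed
  then show ?thesis by simp
qed

lemma Phi_at: "1 \<le> k \<Longrightarrow> k \<in> I \<Longrightarrow> Phi (1 / a k) = g k"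
proof -
  assume k: "1 \<le> k" "k \<in> I"
  have ak: "0 < a k" using apos k by auto
  have "Phi (1 / a k) = Zf (1 / a k) * a k" using Phi_eq[of "1 / a k"] ak by simp
  also have "\<dots> = g k" using Zf_at[OF k] ak by (simp add: g_def field_simps)
  finally show ?thesis .
qed

lemma Eb_big:
  assumes gD: "goodD D" and b: "b \<in> D" and k: "2 \<le> k" "k \<in> I" and lt: "b < bb n a k"
  shows "1 / a k < Eb b"
proof (rule ccontr)
  assume "\<not> ?thesis"
  then have "beta (1 / a k) \<le> beta (Eb b)" using gD_E(1)[OF gD b] by (intro beta_anti) auto
  then show False using gD_E(2)[OF gD b] bb_beta[OF k] lt by simp
qed

context
  assumes ninf: "n = \<infinity>"
begin

lemma I_inf: "i \<in> I \<longleftrightarrow> 1 \<le> i" using ninf by (simp add: Idx_iff)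

lemma g_tend: "g \<longlonglongrightarrow> 0"
proof (rule tendsto_sandwich[of "\<lambda>_. 0" _ _ "\<lambda>k. d k + 2 * d (k div 2)"])
  show "\<forall>\<^sub>F k in sequentially. 0 \<le> g k"
    using eventually_ge_at_top[of 1] by (rule eventually_mono) (auto intro: g_nonneg simp: I_inf)
  show "\<forall>\<^sub>F k in sequentially. g k \<le> d k + 2 * d (k div 2)"
    using eventually_ge_at_top[of 1]
  proof (rule eventually_mono)
    fix k :: nat assume "1 \<le> k"
    then have "real k * a k \<le> 2 * d (k div 2)" using ka_bound I_inf by simp
    then show "g k \<le> d k + 2 * d (k div 2)" by (simp add: g_def)
  qed
  show "((\<lambda>_. 0) \<longlongrightarrow> (0::real)) sequentially" by simp
  have "(\<lambda>k. d (k div 2)) \<longlonglongrightarrow> 0"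
    by (rule filterlim_compose[OF d_tend filterlim_at_top_div_const_nat]) simp
  then have "(\<lambda>k. d k + 2 * d (k div 2)) \<longlonglongrightarrow> 0 + 2 * 0"
    by (intro tendsto_intros d_tend)
  then show "(\<lambda>k. d k + 2 * d (k div 2)) \<longlonglongrightarrow> 0" by simp
qed

lemma g_pos: "1 \<le> k \<Longrightarrow> 0 < g k"
  using d_nonneg[of k] apos I_inf by (simp add: g_def add_nonneg_pos)

lemma g_small: "0 < r \<Longrightarrow> \<exists>K. \<forall>k\<ge>K. g k < r"
  using LIMSEQ_D[OF g_tend] g_pos by (metis abs_of_nonneg diff_zero g_nonneg I_inf le_less_linear less_imp_le norm_conv_dist dist_real_def order.trans zero_less_one)

lemma a_lt: "1 \<le> k \<Longrightarrow> \<exists>j>k. a j < a k"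
proof -
  assume k: "1 \<le> k"
  have ak: "0 < a k" using apos k I_inf by auto
  obtain K where K: "\<forall>j\<ge>K. g j < a k" using g_small[OF ak] by blast
  define j where "j = max K (k + 1)"
  have "a j \<le> g j"
  proof -
    have "0 \<le> d j" by (rule d_nonneg)
    moreover have "a j \<le> real j * a j" using apos I_inf[of j] by (auto simp: j_def)
    ultimately show ?thesis by (simp add: g_def)
  qed
  also have "g j < a k" using K by (simp add: j_def)
  finally show ?thesis by (intro exI[of _ j]) (auto simp: j_def)
qed

lemma bb_pos: "2 \<le> k \<Longrightarrow> 0 < bb n a k"
proof -
  assume k: "2 \<le> k"
  then have kI: "k \<in> I" by (simp add: I_inf)
  have ak: "0 < a k" using apos kI by auto
  obtain j where j: "k < j" "a j < a k" using a_lt[of k] k by auto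
  have jJ: "j \<in> J" using j k by (simp add: J_def I_inf)
  have "1 / a k * a j < 1" using j ak by (simp add: field_simps)
  then have "beta (1 / a k + 1) < beta (1 / a k)" using beta_strict[OF _ _ jJ] ak by simp
  then show ?thesis using beta_nonneg[of "1 / a k + 1"] bb_beta[OF k kI] by simp
qed

lemma inf_goodD: "goodD {0<..}"
  unfolding goodD_def
proof (intro conjI ballI allI impI)
  have reg: "0 < Eb b \<and> beta (Eb b) = b \<and> z0 n a b = Zf (Eb b)" if b: "0 < b" for b
  proof (rule Eb_region[OF b])
    obtain K where K: "\<forall>k\<ge>K. norm (s k - 0) < b" using LIMSEQ_D[OF s_tend b] by blast
    define j where "j = max K 1"
    have "j \<in> Kset" by (simp add: Kset_iff I_inf j_def)
    moreover have "bb n a (j + 1) \<le> s j"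
    proof -
      have "bb n a (j + 1) = s j + d j * ln (a (Suc j))" by (simp add: bb_def)
      moreover have "ln (a (Suc j)) \<le> 0" using a_le1[of "Suc j"] apos by (simp add: I_inf)
      ultimately show ?thesis using d_nonneg[of j] by (simp add: mult_nonneg_nonpos)
    qed
    moreover have "s j < b"
    proof -
      have "\<bar>s j\<bar> < b" using K by (simp add: j_def)
      then show ?thesis by simp
    qed
    ultimately show "\<exists>j\<in>Kset. bb n a (j + 1) \<le> b" by force
  qed
  fix b :: real assume b: "b \<in> {0<..}"
  show "0 < Eb b" "beta (Eb b) = b" "z0 n a b = Zf (Eb b)" using reg b by auto
  fix E assume E: "0 < E \<and> E < Eb b"
  show "\<exists>j\<in>J. E * a j < 1" using reg[of b] b E by (intro wit_pos[of b]) auto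
qed auto

lemma inf_mfin: "0 < \<theta> \<Longrightarrow> finite {k. 1 \<le> k \<and> enat (k + 1) \<le> n \<and> 1 / \<theta> \<le> d k + real k * a k}"
proof -
  assume th: "0 < \<theta>"
  obtain K where K: "\<forall>k\<ge>K. g k < 1 / \<theta>" using g_small[of "1 / \<theta>"] th by auto
  show ?thesis
    by (rule finite_subset[of _ "{..<K}"]) (use K in \<open>auto simp: g_def not_less[symmetric]\<close>)
qed

lemma f_at0:
  assumes th: "0 < \<theta>"
  shows "filterlim (ff n a \<theta>) at_top (at_right 0)"
  unfolding filterlim_at_top
proof
  fix Z :: real
  define K where "K = nat \<lceil>exp Z\<rceil> + 1"
  have K1: "1 \<le> K" by (simp add: K_def)
  have KZ: "Z \<le> ln (real (K + 1))"
  proof -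
    have "exp Z \<le> real (K + 1)" unfolding K_def by linarith
    then show ?thesis by (metis exp_gt_zero ln_exp ln_le_cancel_iff order_less_le_trans)
  qed
  have pos: "0 < bb n a (K + 1)" using K1 by (intro bb_pos) simp
  show "\<forall>\<^sub>F b in at_right 0. Z \<le> ff n a \<theta> b"
    using eventually_at_right_real[OF pos]
  proof (rule eventually_mono)
    fix b assume b: "b \<in> {0<..<bb n a (K + 1)}"
    have bD: "b \<in> {0<..}" using b by simp
    have KI: "K + 1 \<in> I" by (simp add: I_inf)
    have "1 / a (K + 1) < Eb b" using Eb_big[OF inf_goodD bD _ KI] b K1 by simp
    then have "Zf (1 / a (K + 1)) \<le> Zf (Eb b)" using apos KI by (intro Zf_mono) auto
    moreover have "real (K + 1) \<le> Zf (1 / a (K + 1))"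
    proof -
      have "0 < a (K + 1)" using apos KI by auto
      then have "0 \<le> d (K + 1) / a (K + 1)" using d_nonneg[of "K + 1"] by simp
      then show ?thesis using Zf_at[OF _ KI] by simp
    qed
    ultimately have "real (K + 1) \<le> z0 n a b" using gD_E(3)[OF inf_goodD bD] by simp
    then have "ln (real (K + 1)) \<le> ln (z0 n a b)" by simp
    moreover have "0 \<le> \<theta> * b" using th b by simp
    ultimately show "Z \<le> ff n a \<theta> b" using KZ by (simp add: ff_def)
  qed
qed

end

lemma fd_bot:
  assumes ninf: "n = \<infinity>" and th: "0 < \<theta>"
  shows "filterlim (fd \<theta>) at_bot (at_right 0)"
  unfolding filterlim_at_bot
proof
  fix Z :: real
  define c where "c = max 1 (\<theta> - Z)"
  have c: "0 < c" "\<theta> - Z \<le> c" by (auto simp: c_def)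
  obtain K where K: "\<forall>k\<ge>K. g k < 1 / c" using g_small[OF ninf, of "1 / c"] c by auto
  define k0 where "k0 = max K 1 + 1"
  have k0: "2 \<le> k0" "k0 \<in> I" "1 \<le> k0" using I_inf[OF ninf, of k0] by (auto simp: k0_def)
  have gk: "g k0 < 1 / c" "0 < g k0" using K g_pos[OF ninf k0(3)] by (auto simp: k0_def)
  have pos: "0 < bb n a k0" using bb_pos[OF ninf k0(1)] .
  have ak: "0 < a k0" using apos k0 by auto
  show "\<forall>\<^sub>F b in at_right 0. fd \<theta> b \<le> Z"
    using eventually_at_right_real[OF pos]
  proof (rule eventually_mono)
    fix b assume b: "b \<in> {0<..<bb n a k0}"
    have bD: "b \<in> {0<..}" using b by simp
    have "1 / a k0 < Eb b" using Eb_big[OF inf_goodD[OF ninf] bD k0(1,2)] b by simp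
    then have "Phi (Eb b) < Phi (1 / a k0)" using ak by (intro Phi_strict) auto
    then have "Phi (Eb b) < g k0" using Phi_at[OF k0(3,2)] by simp
    then have "1 / g k0 < 1 / Phi (Eb b)"
      using Phi_pos[of "Eb b"] gD_E(1)[OF inf_goodD[OF ninf] bD] by (intro frac_less2) auto
    moreover have "c < 1 / g k0" using gk c by (simp add: field_simps)
    ultimately show "fd \<theta> b \<le> Z" using fd_Phi[OF inf_goodD[OF ninf] bD] c by simp
  qed
qed

end

theorem lemma5:
  fixes n :: enat and a :: "nat \<Rightarrow> real" and \<theta> :: real
  assumes n2: "2 \<le> n"
    and apos: "\<forall>i\<in>Idx n. 0 < a i"
    and amono: "\<forall>i\<in>Idx n. \<forall>j\<in>Idx n. i \<le> j \<longrightarrow> a j \<le> a i"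
    and asum: "a summable_on Idx n" "infsum a (Idx n) \<le> 1"
    and eta_sum: "(\<lambda>i. eta (a i)) summable_on Idx n"
    and theta: "0 < \<theta>"
  shows
  "(n \<noteq> \<infinity> \<longrightarrow>
     (let N = the_enat n; f = ff n a \<theta>; d = dd n a; s = ss n a; m = mm n a \<theta>;
          bs = (if a N * real N \<ge> 1 / \<theta> then 0
                else s m + d m * ln ((1 - \<theta> * d m) / (\<theta> * real m)));
          mt = N - Max {k. 1 \<le> k \<and> k \<le> N - 1 \<and> a (N - k + 1) = a N}
      in (\<forall>b\<ge>0. f b > 0) \<and> convex_on {0..} f \<and>
         (\<exists>f'. continuous_on {0..} f' \<and>
               (\<forall>b\<ge>0. (f has_real_derivative f' b) (at b within {0..}))) \<and>
         f 0 = ln (real N) \<and>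
         (f has_real_derivative (\<theta> - 1 / (a N * real N))) (at 0 within {0..}) \<and>
         filterlim f at_top at_top \<and>
         bs \<ge> 0 \<and> f bs = (INF b\<in>{0..}. f b) \<and>
         (\<forall>b\<ge>0. f b = (INF b\<in>{0..}. f b) \<longrightarrow> b = bs) \<and>
         (a N * real N \<ge> 1 / \<theta> \<longrightarrow>
            bs = 0 \<and> f bs = ln (real N) \<and>
            (\<forall>i. 1 \<le> i \<and> i \<le> mt \<longrightarrow> ((\<lambda>b. xb n a b i) \<longlongrightarrow> 0) (at_right 0)) \<and>
            (\<forall>i. mt < i \<and> i \<le> N \<longrightarrow>
               ((\<lambda>b. xb n a b i) \<longlongrightarrow> 1 / (a N * real (N - mt))) (at_right 0))) \<and>
         (a N * real N < 1 / \<theta> \<longrightarrow>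
            bs = s m + d m * ln ((1 - \<theta> * d m) / (\<theta> * real m)) \<and>
            f bs = bs * \<theta> + ln (real m / (1 - d m * \<theta>)) \<and>
            (\<forall>i. 1 \<le> i \<and> i \<le> m \<longrightarrow> xb n a bs i = 0) \<and>
            (\<forall>i. m < i \<and> i \<le> N \<longrightarrow>
               xb n a bs i = 1 / bs * ln ((1 - \<theta> * d m) / (a i * \<theta> * real m))))))
   \<and>
   (n = \<infinity> \<longrightarrow>
     (let f = ff n a \<theta>; d = dd n a; s = ss n a; m = mm n a \<theta>;
          bs = s m + d m * ln ((1 - \<theta> * d m) / (\<theta> * real m))
      in (\<forall>b>0. f b > 0) \<and> convex_on {0<..} f \<and>
         (\<exists>f'. continuous_on {0<..} f' \<and>
               (\<forall>b>0. (f has_real_derivative f' b) (at b)) \<and>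
               filterlim f' at_bot (at_right 0)) \<and>
         filterlim f at_top (at_right 0) \<and>
         filterlim f at_top at_top \<and>
         bs > 0 \<and> f bs = (INF b\<in>{0<..}. f b) \<and>
         (\<forall>b>0. f b = (INF b\<in>{0<..}. f b) \<longrightarrow> b = bs) \<and>
         f bs = \<theta> * s m + eta (1 - \<theta> * d m) + (1 - \<theta> * d m) * ln (real m)
                + d m * eta \<theta> \<and>
         (\<forall>i. 1 \<le> i \<and> i \<le> m \<longrightarrow> xb n a bs i = 0) \<and>
         (\<forall>i. m < i \<longrightarrow>
            xb n a bs i = 1 / bs * ln ((1 - \<theta> * d m) / (a i * \<theta> * real m))) \<and>
         (\<lambda>i. xb n a bs i * exp (- bs * xb n a bs i)) summable_on Idx n \<and>
         (\<lambda>i. exp (- bs * xb n a bs i)) summable_on Idx n \<and>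
         infsum (\<lambda>i. xb n a bs i * exp (- bs * xb n a bs i)) (Idx n) =
           \<theta> * infsum (\<lambda>i. exp (- bs * xb n a bs i)) (Idx n)))"
proof -
  interpret L n a using n2 apos amono asum eta_sum by unfold_locales auto
  show ?thesis
  proof (intro conjI impI)
    assume nf: "n \<noteq> \<infinity>"
    then obtain N where nN: "n = enat N" by auto
    have tN: "the_enat n = N" using nN by simp
    have gD: "goodD {0..}" by (rule fin_goodD[OF nN])
    have NI: "N \<in> I" by (rule NI[OF nN])
    have aN: "0 < a N" using apos NI by auto
    have N2: "2 \<le> N" by (rule N2[OF nN])
    define m where "m = mm n a \<theta>"
    define bs where "bs = (if a N * real N \<ge> 1 / \<theta> then 0
                else ss n a m + dd n a m * ln ((1 - \<theta> * dd n a m) / (\<theta> * real m)))"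
    define mt where "mt = N - Max {k. 1 \<le> k \<and> k \<le> N - 1 \<and> a (N - k + 1) = a N}"
    have c1: "\<forall>b\<ge>0. ff n a \<theta> b > 0"
    proof (intro allI impI)
      fix b :: real assume "0 \<le> b"
      then have "1 < z0 n a b" using z0_gt1[OF gD] by simp
      then show "0 < ff n a \<theta> b" using \<open>0 \<le> b\<close> theta by (simp add: ff_def add_nonneg_pos)
    qed
    have c2: "convex_on {0..} (ff n a \<theta>)" by (rule f_convex[OF gD])
    have c3: "\<exists>f'. continuous_on {0..} f' \<and>
               (\<forall>b\<ge>0. (ff n a \<theta> has_real_derivative f' b) (at b within {0..}))"
      using fd_cont[OF gD] f_deriv[OF gD] by (intro exI[of _ "fd \<theta>"]) auto
    have z00: "z0 n a 0 = real N" by (simp add: z0_def tN)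
    have c4: "ff n a \<theta> 0 = ln (real N)" by (simp add: ff_def z00)
    have fd0: "fd \<theta> 0 = \<theta> - 1 / (a N * real N)" by (simp add: fd_def Eb_def tN z00)
    have c5: "(ff n a \<theta> has_real_derivative (\<theta> - 1 / (a N * real N))) (at 0 within {0..})"
      using f_deriv[OF gD, of 0 \<theta>] fd0 by simp
    have c6: "filterlim (ff n a \<theta>) at_top at_top"
      by (rule f_top[OF theta, of "{0..}"]) (use z0_gt1[OF gD] in auto)
    have cA: "a N * real N \<ge> 1 / \<theta> \<longrightarrow>
            bs = 0 \<and> ff n a \<theta> bs = ln (real N) \<and>
            (\<forall>i. 1 \<le> i \<and> i \<le> mt \<longrightarrow> ((\<lambda>b. xb n a b i) \<longlongrightarrow> 0) (at_right 0)) \<and>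
            (\<forall>i. mt < i \<and> i \<le> N \<longrightarrow>
               ((\<lambda>b. xb n a b i) \<longlongrightarrow> 1 / (a N * real (N - mt))) (at_right 0))"
      using caseA_limits[OF nN] c4 by (simp add: bs_def mt_def)
    have main: "bs \<ge> 0 \<and> ff n a \<theta> bs = (INF b\<in>{0..}. ff n a \<theta> b) \<and>
         (\<forall>b\<ge>0. ff n a \<theta> b = (INF b\<in>{0..}. ff n a \<theta> b) \<longrightarrow> b = bs) \<and>
         (a N * real N < 1 / \<theta> \<longrightarrow>
            bs = ss n a m + dd n a m * ln ((1 - \<theta> * dd n a m) / (\<theta> * real m)) \<and>
            ff n a \<theta> bs = bs * \<theta> + ln (real m / (1 - dd n a m * \<theta>)) \<and>
            (\<forall>i. 1 \<le> i \<and> i \<le> m \<longrightarrow> xb n a bs i = 0) \<and>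
            (\<forall>i. m < i \<and> i \<le> N \<longrightarrow>
               xb n a bs i = 1 / bs * ln ((1 - \<theta> * dd n a m) / (a i * \<theta> * real m))))"
    proof (cases "a N * real N \<ge> 1 / \<theta>")
      case True
      then have bs0: "bs = 0" by (simp add: bs_def)
      have "1 / (a N * real N) \<le> \<theta>"
        using True theta aN N2 by (simp add: field_simps)
      then have "0 \<le> fd \<theta> 0" using fd0 by simp
      then have fb: "fd \<theta> bs = 0 \<or> (bs = 0 \<and> 0 \<le> fd \<theta> bs)" using bs0 by simp
      have bsD: "bs \<in> {0..}" using bs0 by simp
      show ?thesis using f_INF[OF gD bsD fb] True bs0 by auto
    next
      case False
      then have B: "a N * real N < 1 / \<theta>" by simp
      have fin: "finite {k. 1 \<le> k \<and> enat (k + 1) \<le> n \<and> 1 / \<theta> \<le> dd n a k + real k * a k}"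
        by (rule finite_subset[of _ "{..N}"]) (auto simp: nN)
      have cB: "a N' * real N' < 1 / \<theta>" if "n = enat N'" for N'
        using that nN B by simp
      have mp: "1 \<le> m" "Suc m \<in> I" "2 \<le> m \<Longrightarrow> 1 \<le> \<theta> * g m" "\<theta> * g (Suc m) < 1"
        unfolding m_def using m_props[OF theta fin] cB by blast+
      note cb = caseB_bundle[OF gD theta mp(1,2) mp(3) mp(4)]
      have bsE: "bs = ss n a m + dd n a m * ln ((1 - \<theta> * dd n a m) / (\<theta> * real m))"
        using False by (simp add: bs_def)
      note cb' = cb[folded bsE]
      have fb: "fd \<theta> bs = 0 \<or> (bs = 0 \<and> 0 \<le> fd \<theta> bs)" using cb'(3) by simp
      have INF: "ff n a \<theta> bs = (INF b\<in>{0..}. ff n a \<theta> b)"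
        "\<forall>b\<in>{0..}. ff n a \<theta> b = (INF b\<in>{0..}. ff n a \<theta> b) \<longrightarrow> b = bs"
        using f_INF[OF gD cb'(2) fb] by auto
      have x1: "\<forall>i. 1 \<le> i \<and> i \<le> m \<longrightarrow> xb n a bs i = 0"
        using cb'(5) by (auto simp: T_def)
      have x2: "\<forall>i. m < i \<and> i \<le> N \<longrightarrow>
               xb n a bs i = 1 / bs * ln ((1 - \<theta> * dd n a m) / (a i * \<theta> * real m))"
        using cb'(5) by (auto simp: T_def I_fin[OF nN])
      show ?thesis using cb'(1,4) INF x1 x2 bsE B by (auto simp: less_imp_le)
    qed
    show "let N = the_enat n; f = ff n a \<theta>; d = dd n a; s = ss n a; m = mm n a \<theta>;
          bs = (if a N * real N \<ge> 1 / \<theta> then 0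
                else s m + d m * ln ((1 - \<theta> * d m) / (\<theta> * real m)));
          mt = N - Max {k. 1 \<le> k \<and> k \<le> N - 1 \<and> a (N - k + 1) = a N}
      in (\<forall>b\<ge>0. f b > 0) \<and> convex_on {0..} f \<and>
         (\<exists>f'. continuous_on {0..} f' \<and>
               (\<forall>b\<ge>0. (f has_real_derivative f' b) (at b within {0..}))) \<and>
         f 0 = ln (real N) \<and>
         (f has_real_derivative (\<theta> - 1 / (a N * real N))) (at 0 within {0..}) \<and>
         filterlim f at_top at_top \<and>
         bs \<ge> 0 \<and> f bs = (INF b\<in>{0..}. f b) \<and>
         (\<forall>b\<ge>0. f b = (INF b\<in>{0..}. f b) \<longrightarrow> b = bs) \<and>
         (a N * real N \<ge> 1 / \<theta> \<longrightarrow>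
            bs = 0 \<and> f bs = ln (real N) \<and>
            (\<forall>i. 1 \<le> i \<and> i \<le> mt \<longrightarrow> ((\<lambda>b. xb n a b i) \<longlongrightarrow> 0) (at_right 0)) \<and>
            (\<forall>i. mt < i \<and> i \<le> N \<longrightarrow>
               ((\<lambda>b. xb n a b i) \<longlongrightarrow> 1 / (a N * real (N - mt))) (at_right 0))) \<and>
         (a N * real N < 1 / \<theta> \<longrightarrow>
            bs = s m + d m * ln ((1 - \<theta> * d m) / (\<theta> * real m)) \<and>
            f bs = bs * \<theta> + ln (real m / (1 - d m * \<theta>)) \<and>
            (\<forall>i. 1 \<le> i \<and> i \<le> m \<longrightarrow> xb n a bs i = 0) \<and>
            (\<forall>i. m < i \<and> i \<le> N \<longrightarrow>
               xb n a bs i = 1 / bs * ln ((1 - \<theta> * d m) / (a i * \<theta> * real m))))"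
      unfolding Let_def tN m_def[symmetric] bs_def[symmetric] mt_def[symmetric]
      apply (intro conjI)
                apply (fact c1)
               apply (fact c2)
              apply (fact c3)
             apply (fact c4)
            apply (fact c5)
           apply (fact c6)
          apply (use main in blast)
         apply (use main in blast)
        apply (use main in blast)
       apply (fact cA)
      apply (use main in blast)
      done
  next
    assume ninf: "n = \<infinity>"
    have gD: "goodD {0<..}" by (rule inf_goodD[OF ninf])
    define m where "m = mm n a \<theta>"
    define bs where "bs = ss n a m + dd n a m * ln ((1 - \<theta> * dd n a m) / (\<theta> * real m))"
    have c1: "\<forall>b>0. ff n a \<theta> b > 0"
    proof (intro allI impI)
      fix b :: real assume "0 < b"
      then have "1 < z0 n a b" using z0_gt1[OF gD] by simp
      then show "0 < ff n a \<theta> b" using \<open>0 < b\<close> theta by (simp add: ff_def add_nonneg_pos)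
    qed
    have c2: "convex_on {0<..} (ff n a \<theta>)" by (rule f_convex[OF gD])
    have c3: "\<exists>f'. continuous_on {0<..} f' \<and>
               (\<forall>b>0. (ff n a \<theta> has_real_derivative f' b) (at b)) \<and>
               filterlim f' at_bot (at_right 0)"
      using fd_cont[OF gD] f_deriv_at[OF gD] fd_bot[OF ninf theta]
      by (intro exI[of _ "fd \<theta>"]) auto
    have c5: "filterlim (ff n a \<theta>) at_top (at_right 0)" by (rule f_at0[OF ninf theta])
    have c6: "filterlim (ff n a \<theta>) at_top at_top"
      by (rule f_top[OF theta, of "{0<..}"]) (use z0_gt1[OF gD] in auto)
    have cB: "a N' * real N' < 1 / \<theta>" if "n = enat N'" for N'
      using that ninf by simp
    have mp: "1 \<le> m" "Suc m \<in> I" "2 \<le> m \<Longrightarrow> 1 \<le> \<theta> * g m" "\<theta> * g (Suc m) < 1"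
      unfolding m_def using m_props[OF theta inf_mfin[OF ninf theta]] cB by blast+
    note cb0 = caseB_bundle[OF gD theta mp(1,2) mp(3) mp(4)]
    have cb1: "0 < bs" unfolding bs_def by (rule cb0(1))
    have cb2: "bs \<in> {0<..}" unfolding bs_def by (rule cb0(2))
    have cb3: "fd \<theta> bs = 0" unfolding bs_def by (rule cb0(3))
    have cb4: "ff n a \<theta> bs = bs * \<theta> + ln (real m / (1 - dd n a m * \<theta>))" unfolding bs_def by (rule cb0(4))
    have cb5: "xb n a bs = (\<lambda>i. if i \<in> T m then 1 / bs * ln ((1 - \<theta> * dd n a m) / (a i * \<theta> * real m)) else 0)" unfolding bs_def by (rule cb0(5))
    have cb6: "(\<lambda>i. exp (- bs * xb n a bs i)) summable_on I" unfolding bs_def by (rule cb0(6))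
    have cb7: "(\<lambda>i. xb n a bs i * exp (- bs * xb n a bs i)) summable_on I" unfolding bs_def by (rule cb0(7))
    have cb8: "infsum (\<lambda>i. xb n a bs i * exp (- bs * xb n a bs i)) I = \<theta> * infsum (\<lambda>i. exp (- bs * xb n a bs i)) I" unfolding bs_def by (rule cb0(8))
    note cb = cb1 cb2 cb3 cb4 cb5 cb6 cb7 cb8
    have fb: "fd \<theta> bs = 0 \<or> (bs = 0 \<and> 0 \<le> fd \<theta> bs)" using cb(3) by simp
    have INF: "ff n a \<theta> bs = (INF b\<in>{0<..}. ff n a \<theta> b)"
      "\<forall>b\<in>{0<..}. ff n a \<theta> b = (INF b\<in>{0<..}. ff n a \<theta> b) \<longrightarrow> b = bs"
      using f_INF[OF gD cb(2) fb] by auto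
    have x1: "\<forall>i. 1 \<le> i \<and> i \<le> m \<longrightarrow> xb n a bs i = 0"
      using cb(5) by (auto simp: T_def)
    have x2: "\<forall>i. m < i \<longrightarrow>
             xb n a bs i = 1 / bs * ln ((1 - \<theta> * dd n a m) / (a i * \<theta> * real m))"
      using cb(5) mp(1) by (auto simp: T_def I_inf[OF ninf])
    have fval: "ff n a \<theta> bs = \<theta> * ss n a m + eta (1 - \<theta> * dd n a m) + (1 - \<theta> * dd n a m) * ln (real m)
                + dd n a m * eta \<theta>"
    proof -
      define q where "q = 1 - \<theta> * dd n a m"
      have q: "0 < q" using mstar(1)[OF theta mp] by (simp add: q_def)
      have m0: "0 < real m" using mp(1) by simp
      have e1: "ff n a \<theta> bs = bs * \<theta> + ln (real m) - ln q"
      proof -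
        have "1 - dd n a m * \<theta> = q" by (simp add: q_def mult.commute)
        then have "ff n a \<theta> bs = bs * \<theta> + ln (real m / q)" using cb(4) by simp
        also have "ln (real m / q) = ln (real m) - ln q" using q m0 by (simp add: ln_div)
        finally show ?thesis by simp
      qed
      have e2: "bs = ss n a m + dd n a m * (ln q - ln \<theta> - ln (real m))"
        using q theta m0 by (simp add: bs_def q_def[symmetric] ln_div ln_mult)
      have h3: "\<theta> * dd n a m = 1 - q" by (simp add: q_def)
      have "eta q = - q * ln q" "eta \<theta> = - \<theta> * ln \<theta>" using q theta by (simp_all add: eta_def)
      then have "ff n a \<theta> bs = \<theta> * ss n a m + eta q + q * ln (real m) + dd n a m * eta \<theta>"
        using alg_fval[OF e1 e2 h3] by simp
      then show ?thesis by (simp only: q_def)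
    qed
    show "let f = ff n a \<theta>; d = dd n a; s = ss n a; m = mm n a \<theta>;
          bs = s m + d m * ln ((1 - \<theta> * d m) / (\<theta> * real m))
      in (\<forall>b>0. f b > 0) \<and> convex_on {0<..} f \<and>
         (\<exists>f'. continuous_on {0<..} f' \<and>
               (\<forall>b>0. (f has_real_derivative f' b) (at b)) \<and>
               filterlim f' at_bot (at_right 0)) \<and>
         filterlim f at_top (at_right 0) \<and>
         filterlim f at_top at_top \<and>
         bs > 0 \<and> f bs = (INF b\<in>{0<..}. f b) \<and>
         (\<forall>b>0. f b = (INF b\<in>{0<..}. f b) \<longrightarrow> b = bs) \<and>
         f bs = \<theta> * s m + eta (1 - \<theta> * d m) + (1 - \<theta> * d m) * ln (real m)
                + d m * eta \<theta> \<and>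
         (\<forall>i. 1 \<le> i \<and> i \<le> m \<longrightarrow> xb n a bs i = 0) \<and>
         (\<forall>i. m < i \<longrightarrow>
            xb n a bs i = 1 / bs * ln ((1 - \<theta> * d m) / (a i * \<theta> * real m))) \<and>
         (\<lambda>i. xb n a bs i * exp (- bs * xb n a bs i)) summable_on Idx n \<and>
         (\<lambda>i. exp (- bs * xb n a bs i)) summable_on Idx n \<and>
         infsum (\<lambda>i. xb n a bs i * exp (- bs * xb n a bs i)) (Idx n) =
           \<theta> * infsum (\<lambda>i. exp (- bs * xb n a bs i)) (Idx n)"
      unfolding Let_def m_def[symmetric] bs_def[symmetric]
      apply (intro conjI)
                   apply (fact c1)
                  apply (fact c2)
                 apply (fact c3)
                apply (fact c5)
               apply (fact c6)
              apply (fact cb(1))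
             apply (fact INF(1))
            apply (use INF(2) in simp)
           apply (fact fval)
          apply (fact x1)
         apply (fact x2)
        apply (fact cb(7))
       apply (fact cb(6))
      apply (fact cb(8))
      done
  qed
qed

end
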